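(* Let $\mathcal{L}=(R_i:i<k)$ be a finite relational language, $K$ a Fraïssé class of finite $\mathcal{L}$-structures with the Strong Amalgamation Property, $T$ the theory of its Fraïssé limit, and $N=(A,B)$ a monster model of $T_{pfc}$ (with $A$ the universe of sort $O$ and $B$ of sort $P$). For $j=1,\dots,n$ let $\phi_j(x,y_j,z_j)$ be $\mathcal{L}_{pfc}$-formulas where $x$ is a single variable of sort $O$, $y_j$ is a tuple of variables of sort $O$, and $z_j$ is a single variable of sort $P$; let $a_j$ be tuples from $A$ and let $b_1,\dots,b_n\in B$ be pairwise distinct. If each $\phi_j(x,a_j,b_j)$ is non-algebraic (has infinitely many realizations in $N$), then the conjunction $\bigwedge_{j=1}^n\phi_j(x,a_j,b_j)$ is non-algebraic.
   Context: $K$ has SAP if for all $A,B,C\in K$ and embeddings $e:A\to B$, $f:A\to C$ there are $D\in K$ and embeddings $g:B\to D$, $h:C\to D$ with $ge=hf$ and $\mathrm{im}(g)\cap\mathrm{im}(h)=\mathrm{im}(ge)$. If $R_i$ has arity $n_i$, $\mathcal{L}_{pfc}$ is the two-sorted language with sorts $O$ and $P$ and relation symbols $R^i_x(x,y_1,\dots,y_{n_i})$ with $x$ of sort $P$ and $y_1,\dots,y_{n_i}$ of sort $O$. For an $\mathcal{L}_{pfc}$-structure $M=(A,B)$ and $b\in B$, $A_b$ is the $\mathcal{L}$-structure with domain $A$ in which $R_i$ is interpreted as $\{\bar y: R^i(b,\bar y)\}$. $K_{pfc}$ is the class of finite $\mathcal{L}_{pfc}$-structures $(A,B)$ such that $A_b$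 is isomorphic to a member of $K$ for every $b\in B$; it is a Fraïssé class with SAP, and $T_{pfc}$ is the theory of its Fraïssé limit (it has quantifier elimination). *)

theory Defs
  imports Main "HOL-Library.Countable_Set"
begin

text \<open>An L-structure with universe of type 'a: a carrier set and an interpretation
  of the relation symbols (index i, tuple as a list).\<close>
type_synonym 'a str = "'a set \<times> (nat \<Rightarrow> 'a list \<Rightarrow> bool)"

definition wf_str :: "nat \<Rightarrow> (nat \<Rightarrow> nat) \<Rightarrow> 'a str \<Rightarrow> bool" where
  "wf_str k ar S \<longleftrightarrow>
     (\<forall>i xs. snd S i xs \<longrightarrow> i < k \<and> length xs = ar i \<and> set xs \<subseteq> fst S)"

definition emb_str :: "'a str \<Rightarrow> 'b str \<Rightarrow> ('a \<Rightarrow> 'b) \<Rightarrow> bool" where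
  "emb_str S S' f \<longleftrightarrow> inj_on f (fst S) \<and> f ` fst S \<subseteq> fst S' \<and>
     (\<forall>i xs. set xs \<subseteq> fst S \<longrightarrow> (snd S i xs \<longleftrightarrow> snd S' i (map f xs)))"

definition isomorphic_str :: "'a str \<Rightarrow> 'b str \<Rightarrow> bool" where
  "isomorphic_str S S' \<longleftrightarrow> (\<exists>f. emb_str S S' f \<and> f ` fst S = fst S')"

definition substr :: "'a str \<Rightarrow> 'a set \<Rightarrow> 'a str" where
  "substr S U = (U, \<lambda>i xs. snd S i xs \<and> set xs \<subseteq> U)"

text \<open>A class K of finite L-structures (represented, up to isomorphism, by structures
  with carriers in nat) is a Fraisse class: nonempty, closed under isomorphism,
  hereditary, JEP, AP.  (Countably many isomorphism types is automatic for a
  finite relational language.)\<close>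
definition fraisse_class :: "nat \<Rightarrow> (nat \<Rightarrow> nat) \<Rightarrow> nat str set \<Rightarrow> bool" where
  "fraisse_class k ar K \<longleftrightarrow>
     K \<noteq> {} \<and>
     (\<forall>S\<in>K. finite (fst S) \<and> wf_str k ar S) \<and>
     (\<forall>S\<in>K. \<forall>S'. wf_str k ar S' \<and> isomorphic_str S S' \<longrightarrow> S' \<in> K) \<and>
     (\<forall>S\<in>K. \<forall>U. U \<subseteq> fst S \<longrightarrow> substr S U \<in> K) \<and>
     (\<forall>S1\<in>K. \<forall>S2\<in>K. \<exists>D\<in>K. \<exists>f g. emb_str S1 D f \<and> emb_str S2 D g) \<and>
     (\<forall>A\<in>K. \<forall>B\<in>K. \<forall>C\<in>K. \<forall>e f. emb_str A B e \<and> emb_str A C f \<longrightarrow>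
        (\<exists>D\<in>K. \<exists>g h. emb_str B D g \<and> emb_str C D h \<and>
            (\<forall>x\<in>fst A. g (e x) = h (f x))))"

definition SAP :: "nat str set \<Rightarrow> bool" where
  "SAP K \<longleftrightarrow>
     (\<forall>A\<in>K. \<forall>B\<in>K. \<forall>C\<in>K. \<forall>e f. emb_str A B e \<and> emb_str A C f \<longrightarrow>
        (\<exists>D\<in>K. \<exists>g h. emb_str B D g \<and> emb_str C D h \<and>
            (\<forall>x\<in>fst A. g (e x) = h (f x)) \<and>
            g ` fst B \<inter> h ` fst C = (g \<circ> e) ` fst A))"

record ('o, 'p) pstr =
  OS :: "'o set"
  PS :: "'p set"
  PR :: "nat \<Rightarrow> 'p \<Rightarrow> 'o list \<Rightarrow> bool"

definition wf_pstr :: "nat \<Rightarrow> (nat \<Rightarrow> nat) \<Rightarrow> ('o, 'p) pstr \<Rightarrow> bool" where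
  "wf_pstr k ar M \<longleftrightarrow>
     (\<forall>i b ys. PR M i b ys \<longrightarrow> i < k \<and> b \<in> PS M \<and> length ys = ar i \<and> set ys \<subseteq> OS M)"

definition fiber :: "('o, 'p) pstr \<Rightarrow> 'p \<Rightarrow> 'o str" where
  "fiber M b = (OS M, \<lambda>i ys. PR M i b ys)"

definition in_Kpfc :: "nat \<Rightarrow> (nat \<Rightarrow> nat) \<Rightarrow> nat str set \<Rightarrow> ('o, 'p) pstr \<Rightarrow> bool" where
  "in_Kpfc k ar K M \<longleftrightarrow> finite (OS M) \<and> finite (PS M) \<and> wf_pstr k ar M \<and>
     (\<forall>b\<in>PS M. \<exists>S\<in>K. isomorphic_str (fiber M b) S)"

definition pemb :: "('o, 'p) pstr \<Rightarrow> ('o2, 'p2) pstr \<Rightarrow> ('o \<Rightarrow> 'o2) \<Rightarrow> ('p \<Rightarrow> 'p2) \<Rightarrow> bool" where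
  "pemb M M' fo fp \<longleftrightarrow>
     inj_on fo (OS M) \<and> fo ` OS M \<subseteq> OS M' \<and> inj_on fp (PS M) \<and> fp ` PS M \<subseteq> PS M' \<and>
     (\<forall>i. \<forall>b\<in>PS M. \<forall>ys. set ys \<subseteq> OS M \<longrightarrow> (PR M i b ys \<longleftrightarrow> PR M' i (fp b) (map fo ys)))"

definition pautom :: "('o, 'p) pstr \<Rightarrow> ('o \<Rightarrow> 'o) \<Rightarrow> ('p \<Rightarrow> 'p) \<Rightarrow> bool" where
  "pautom M go gp \<longleftrightarrow> pemb M M go gp \<and> go ` OS M = OS M \<and> gp ` PS M = PS M"

definition psub :: "('o, 'p) pstr \<Rightarrow> 'o set \<Rightarrow> 'p set \<Rightarrow> ('o, 'p) pstr" where
  "psub M U V = \<lparr>OS = U, PS = V, PR = (\<lambda>i b ys. PR M i b ys \<and> b \<in> V \<and> set ys \<subseteq> U)\<rparr>"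

definition fraisse_limit_pfc :: "nat \<Rightarrow> (nat \<Rightarrow> nat) \<Rightarrow> nat str set \<Rightarrow> (nat, nat) pstr \<Rightarrow> bool" where
  "fraisse_limit_pfc k ar K M \<longleftrightarrow>
     wf_pstr k ar M \<and>
     (\<forall>U V. U \<subseteq> OS M \<and> V \<subseteq> PS M \<and> finite U \<and> finite V \<longrightarrow> in_Kpfc k ar K (psub M U V)) \<and>
     (\<forall>S :: (nat, nat) pstr. in_Kpfc k ar K S \<longrightarrow> (\<exists>fo fp. pemb S M fo fp)) \<and>
     (\<forall>U V fo fp. U \<subseteq> OS M \<and> V \<subseteq> PS M \<and> finite U \<and> finite V \<and> pemb (psub M U V) M fo fp
        \<longrightarrow> (\<exists>go gp. pautom M go gp \<and> (\<forall>u\<in>U. go u = fo u) \<and> (\<forall>v\<in>V. gp v = fp v)))"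

datatype pfm =
    EqO nat nat
  | EqP nat nat
  | Rel nat nat "nat list" \<comment> \<open>R^i(z; y_1..y_n): symbol i, P-variable z, O-variables ys\<close>
  | FF
  | Neg pfm
  | Conj pfm pfm
  | ExO nat pfm
  | ExP nat pfm

fun psat :: "('o, 'p) pstr \<Rightarrow> (nat \<Rightarrow> 'o) \<Rightarrow> (nat \<Rightarrow> 'p) \<Rightarrow> pfm \<Rightarrow> bool" where
  "psat M vo vp (EqO i j) = (vo i = vo j)"
| "psat M vo vp (EqP i j) = (vp i = vp j)"
| "psat M vo vp (Rel i z ys) = PR M i (vp z) (map vo ys)"
| "psat M vo vp FF = False"
| "psat M vo vp (Neg \<phi>) = (\<not> psat M vo vp \<phi>)"
| "psat M vo vp (Conj \<phi> \<psi>) = (psat M vo vp \<phi> \<and> psat M vo vp \<psi>)"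
| "psat M vo vp (ExO v \<phi>) = (\<exists>c\<in>OS M. psat M (vo(v := c)) vp \<phi>)"
| "psat M vo vp (ExP v \<phi>) = (\<exists>d\<in>PS M. psat M vo (vp(v := d)) \<phi>)"

fun freeO :: "pfm \<Rightarrow> nat set" where
  "freeO (EqO i j) = {i, j}"
| "freeO (EqP i j) = {}"
| "freeO (Rel i z ys) = set ys"
| "freeO FF = {}"
| "freeO (Neg \<phi>) = freeO \<phi>"
| "freeO (Conj \<phi> \<psi>) = freeO \<phi> \<union> freeO \<psi>"
| "freeO (ExO v \<phi>) = freeO \<phi> - {v}"
| "freeO (ExP v \<phi>) = freeO \<phi>"

fun freeP :: "pfm \<Rightarrow> nat set" where
  "freeP (EqO i j) = {}"
| "freeP (EqP i j) = {i, j}"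
| "freeP (Rel i z ys) = {z}"
| "freeP FF = {}"
| "freeP (Neg \<phi>) = freeP \<phi>"
| "freeP (Conj \<phi> \<psi>) = freeP \<phi> \<union> freeP \<psi>"
| "freeP (ExO v \<phi>) = freeP \<phi>"
| "freeP (ExP v \<phi>) = freeP \<phi> - {v}"

definition sentence :: "pfm \<Rightarrow> bool" where
  "sentence \<phi> \<longleftrightarrow> freeO \<phi> = {} \<and> freeP \<phi> = {}"

text \<open>N is a model of T_pfc = Th(Fraisse limit of K_pfc).\<close>
definition model_Tpfc :: "nat \<Rightarrow> (nat \<Rightarrow> nat) \<Rightarrow> nat str set \<Rightarrow> ('o, 'p) pstr \<Rightarrow> bool" where
  "model_Tpfc k ar K N \<longleftrightarrow> wf_pstr k ar N \<and>
     (\<exists>M. fraisse_limit_pfc k ar K M \<and>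
        (\<forall>\<phi>. sentence \<phi> \<longrightarrow>
           (psat M (\<lambda>_. 0) (\<lambda>_. 0) \<phi> \<longleftrightarrow> psat N (\<lambda>_. undefined) (\<lambda>_. undefined) \<phi>)))"

text \<open>Formulas with parameters: a formula together with an assignment; the type
  variable is O-variable 0 (resp. P-variable 0); all other free variables are sent into
  the parameter sets Po, Pp.\<close>
definition params_in :: "'o set \<Rightarrow> 'p set \<Rightarrow> pfm \<Rightarrow> (nat \<Rightarrow> 'o) \<Rightarrow> (nat \<Rightarrow> 'p) \<Rightarrow> nat set \<Rightarrow> nat set \<Rightarrow> bool" where
  "params_in Po Pp \<phi> vo vp XO XP \<longleftrightarrow>
     (\<forall>l\<in>freeO \<phi> - XO. vo l \<in> Po) \<and> (\<forall>l\<in>freeP \<phi> - XP. vp l \<in> Pp)"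

definition saturated :: "('o, 'p) pstr \<Rightarrow> ('o + 'p) set \<Rightarrow> bool" where
  "saturated N \<kappa> \<longleftrightarrow>
     (\<forall>Po Pp. Po \<subseteq> OS N \<and> Pp \<subseteq> PS N \<and> (card_of (Po <+> Pp), card_of \<kappa>) \<in> ordLess \<longrightarrow>
       (\<forall>\<Sigma>. (\<forall>(\<phi>, vo, vp)\<in>\<Sigma>. params_in Po Pp \<phi> vo vp {0} {}) \<and>
             (\<forall>F. F \<subseteq> \<Sigma> \<and> finite F \<longrightarrow>
                 (\<exists>c\<in>OS N. \<forall>(\<phi>, vo, vp)\<in>F. psat N (vo(0 := c)) vp \<phi>))
          \<longrightarrow> (\<exists>c\<in>OS N. \<forall>(\<phi>, vo, vp)\<in>\<Sigma>. psat N (vo(0 := c)) vp \<phi>)) \<and>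
       (\<forall>\<Sigma>. (\<forall>(\<phi>, vo, vp)\<in>\<Sigma>. params_in Po Pp \<phi> vo vp {} {0}) \<and>
             (\<forall>F. F \<subseteq> \<Sigma> \<and> finite F \<longrightarrow>
                 (\<exists>d\<in>PS N. \<forall>(\<phi>, vo, vp)\<in>F. psat N vo (vp(0 := d)) \<phi>))
          \<longrightarrow> (\<exists>d\<in>PS N. \<forall>(\<phi>, vo, vp)\<in>\<Sigma>. psat N vo (vp(0 := d)) \<phi>)))"

definition strongly_homogeneous :: "('o, 'p) pstr \<Rightarrow> ('o + 'p) set \<Rightarrow> bool" where
  "strongly_homogeneous N \<kappa> \<longleftrightarrow>
     (\<forall>Po Pp fo fp. Po \<subseteq> OS N \<and> Pp \<subseteq> PS N \<and> (card_of (Po <+> Pp), card_of \<kappa>) \<in> ordLess \<and>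
        fo ` Po \<subseteq> OS N \<and> fp ` Pp \<subseteq> PS N \<and>
        (\<forall>\<phi> vo vp. params_in Po Pp \<phi> vo vp {} {} \<longrightarrow>
            (psat N vo vp \<phi> \<longleftrightarrow> psat N (fo \<circ> vo) (fp \<circ> vp) \<phi>))
      \<longrightarrow> (\<exists>go gp. pautom N go gp \<and> (\<forall>u\<in>Po. go u = fo u) \<and> (\<forall>v\<in>Pp. gp v = fp v)))"

definition monster_Tpfc :: "nat \<Rightarrow> (nat \<Rightarrow> nat) \<Rightarrow> nat str set \<Rightarrow> ('o, 'p) pstr \<Rightarrow> bool" where
  "monster_Tpfc k ar K N \<longleftrightarrow> model_Tpfc k ar K N \<and>
     (\<exists>\<kappa>. \<not> countable \<kappa> \<and> saturated N \<kappa> \<and> strongly_homogeneous N \<kappa>)"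

text \<open>Realizations in N of phi(x, a, b): x is O-variable 0, the tuple a occupies
  O-variables 1..length a, and b is P-variable 0.\<close>
definition realizations :: "('o, 'p) pstr \<Rightarrow> pfm \<Rightarrow> 'o list \<Rightarrow> 'p \<Rightarrow> 'o set" where
  "realizations N \<phi> a b =
     {c \<in> OS N. psat N (\<lambda>l. if l = 0 then c else a ! (l - 1)) (\<lambda>_. b) \<phi>}"

end

theory Submission
  imports Defs
begin


lemma psat_cong:
  "(\<forall>l\<in>freeO \<phi>. vo l = vo' l) \<Longrightarrow> (\<forall>l\<in>freeP \<phi>. vp l = vp' l) \<Longrightarrow>
   psat S vo vp \<phi> = psat S vo' vp' \<phi>"
proof (induction \<phi> arbitrary: vo vp vo' vp')
  case (Rel i z ys)
  then show ?case by (simp cong: map_cong)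
next
  case (ExO v \<phi>)
  have "\<And>c. psat S (vo(v:=c)) vp \<phi> = psat S (vo'(v:=c)) vp' \<phi>"
    using ExO by (intro ExO.IH) auto
  then show ?case by simp
next
  case (ExP v \<phi>)
  have "\<And>c. psat S vo (vp(v:=c)) \<phi> = psat S vo' (vp'(v:=c)) \<phi>"
    using ExP by (intro ExP.IH) auto
  then show ?case by simp
next
  case (Neg p)
  then show ?case by (metis psat.simps(5) freeO.simps(5) freeP.simps(5))
next
  case (Conj p q)
  have "psat S vo vp p = psat S vo' vp' p" using Conj.prems by (intro Conj.IH(1)) auto
  moreover have "psat S vo vp q = psat S vo' vp' q" using Conj.prems by (intro Conj.IH(2)) auto
  ultimately show ?case by simp
qed auto

fun conjs :: "pfm list \<Rightarrow> pfm" where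
  "conjs [] = Neg FF"
| "conjs (p # ps) = Conj p (conjs ps)"

lemma psat_conjs[simp]: "psat S vo vp (conjs ps) = (\<forall>p\<in>set ps. psat S vo vp p)"
  by (induction ps) auto

lemma freeO_conjs[simp]: "freeO (conjs ps) = (\<Union>p\<in>set ps. freeO p)"
  by (induction ps) auto

lemma freeP_conjs[simp]: "freeP (conjs ps) = (\<Union>p\<in>set ps. freeP p)"
  by (induction ps) auto

definition lit :: "bool \<Rightarrow> pfm \<Rightarrow> pfm" where
  "lit b p = (if b then p else Neg p)"

lemma psat_lit[simp]: "psat S vo vp (lit b p) = (psat S vo vp p = b)"
  by (simp add: lit_def)

lemma freeO_lit[simp]: "freeO (lit b p) = freeO p" by (simp add: lit_def)
lemma freeP_lit[simp]: "freeP (lit b p) = freeP p" by (simp add: lit_def)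

fun exOs :: "nat list \<Rightarrow> pfm \<Rightarrow> pfm" where
  "exOs [] p = p"
| "exOs (v # vs) p = ExO v (exOs vs p)"

fun exPs :: "nat list \<Rightarrow> pfm \<Rightarrow> pfm" where
  "exPs [] p = p"
| "exPs (v # vs) p = ExP v (exPs vs p)"

lemma freeO_exOs[simp]: "freeO (exOs vs p) = freeO p - set vs"
  by (induction vs) auto
lemma freeP_exOs[simp]: "freeP (exOs vs p) = freeP p"
  by (induction vs) auto
lemma freeO_exPs[simp]: "freeO (exPs vs p) = freeO p"
  by (induction vs) auto
lemma freeP_exPs[simp]: "freeP (exPs vs p) = freeP p - set vs"
  by (induction vs) auto

lemma psat_exOs:
  "psat S vo vp (exOs vs p) =
   (\<exists>vo'. (\<forall>l. l \<notin> set vs \<longrightarrow> vo' l = vo l) \<and> (\<forall>l\<in>set vs. vo' l \<in> OS S) \<and> psat S vo' vp p)"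
proof (induction vs arbitrary: vo)
  case Nil
  have e: "\<And>vo'. (\<forall>l. vo' l = vo l) = (vo' = vo)" by auto
  show ?case by (simp add: e)
next
  case (Cons v vs)
  show ?case
  proof
    assume "psat S vo vp (exOs (v # vs) p)"
    then obtain c vo' where c: "c \<in> OS S" and h: "\<forall>l. l \<notin> set vs \<longrightarrow> vo' l = (vo(v:=c)) l"
      "\<forall>l\<in>set vs. vo' l \<in> OS S" "psat S vo' vp p"
      using Cons by auto
    show "\<exists>vo'. (\<forall>l. l \<notin> set (v # vs) \<longrightarrow> vo' l = vo l) \<and> (\<forall>l\<in>set (v # vs). vo' l \<in> OS S) \<and> psat S vo' vp p"
    proof (intro exI[of _ vo'] conjI)
      show "\<forall>l. l \<notin> set (v # vs) \<longrightarrow> vo' l = vo l" using h(1) by auto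
      show "\<forall>l\<in>set (v # vs). vo' l \<in> OS S"
      proof
        fix l assume "l \<in> set (v # vs)"
        then show "vo' l \<in> OS S" using h c by (cases "l \<in> set vs") auto
      qed
      show "psat S vo' vp p" by fact
    qed
  next
    assume "\<exists>vo'. (\<forall>l. l \<notin> set (v # vs) \<longrightarrow> vo' l = vo l) \<and> (\<forall>l\<in>set (v # vs). vo' l \<in> OS S) \<and> psat S vo' vp p"
    then obtain vo' where h: "\<forall>l. l \<notin> set (v # vs) \<longrightarrow> vo' l = vo l" "\<forall>l\<in>set (v # vs). vo' l \<in> OS S" "psat S vo' vp p"
      by blast
    have "psat S (vo(v := vo' v)) vp (exOs vs p)"
      by (subst Cons.IH, rule exI[of _ vo'], use h in auto)
    then show "psat S vo vp (exOs (v # vs) p)" using h(2) by auto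
  qed
qed

lemma psat_exPs:
  "psat S vo vp (exPs vs p) =
   (\<exists>vp'. (\<forall>l. l \<notin> set vs \<longrightarrow> vp' l = vp l) \<and> (\<forall>l\<in>set vs. vp' l \<in> PS S) \<and> psat S vo vp' p)"
proof (induction vs arbitrary: vp)
  case Nil
  have e: "\<And>vp'. (\<forall>l. vp' l = vp l) = (vp' = vp)" by auto
  show ?case by (simp add: e)
next
  case (Cons v vs)
  show ?case
  proof
    assume "psat S vo vp (exPs (v # vs) p)"
    then obtain c vp' where c: "c \<in> PS S" and h: "\<forall>l. l \<notin> set vs \<longrightarrow> vp' l = (vp(v:=c)) l"
      "\<forall>l\<in>set vs. vp' l \<in> PS S" "psat S vo vp' p"
      using Cons by auto
    show "\<exists>vp'. (\<forall>l. l \<notin> set (v # vs) \<longrightarrow> vp' l = vp l) \<and> (\<forall>l\<in>set (v # vs). vp' l \<in> PS S) \<and> psat S vo vp' p"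
    proof (intro exI[of _ vp'] conjI)
      show "\<forall>l. l \<notin> set (v # vs) \<longrightarrow> vp' l = vp l" using h(1) by auto
      show "\<forall>l\<in>set (v # vs). vp' l \<in> PS S"
      proof
        fix l assume "l \<in> set (v # vs)"
        then show "vp' l \<in> PS S" using h c by (cases "l \<in> set vs") auto
      qed
      show "psat S vo vp' p" by fact
    qed
  next
    assume "\<exists>vp'. (\<forall>l. l \<notin> set (v # vs) \<longrightarrow> vp' l = vp l) \<and> (\<forall>l\<in>set (v # vs). vp' l \<in> PS S) \<and> psat S vo vp' p"
    then obtain vp' where h: "\<forall>l. l \<notin> set (v # vs) \<longrightarrow> vp' l = vp l" "\<forall>l\<in>set (v # vs). vp' l \<in> PS S" "psat S vo vp' p"
      by blast
    have "psat S vo (vp(v := vp' v)) (exPs vs p)"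
      by (subst Cons.IH, rule exI[of _ vp'], use h in auto)
    then show "psat S vo vp (exPs (v # vs) p)" using h(2) by auto
  qed
qed




definition sameqf :: "('o,'p) pstr \<Rightarrow> (nat\<Rightarrow>'o) \<Rightarrow> (nat\<Rightarrow>'p) \<Rightarrow> ('o2,'p2) pstr \<Rightarrow> (nat\<Rightarrow>'o2) \<Rightarrow> (nat\<Rightarrow>'p2) \<Rightarrow> nat set \<Rightarrow> nat set \<Rightarrow> bool" where
"sameqf S vo vp T vo' vp' VO VP \<longleftrightarrow>
   (\<forall>l\<in>VO. \<forall>l'\<in>VO. (vo l = vo l') = (vo' l = vo' l')) \<and>
   (\<forall>z\<in>VP. \<forall>z'\<in>VP. (vp z = vp z') = (vp' z = vp' z')) \<and>
   (\<forall>i z ys. z\<in>VP \<longrightarrow> set ys \<subseteq> VO \<longrightarrow> (PR S i (vp z) (map vo ys) = PR T i (vp' z) (map vo' ys)))"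

lemma sameqf_refl: "sameqf S vo vp S vo vp VO VP"
  by (simp add: sameqf_def)

lemma sameqf_sym: "sameqf S vo vp T vo' vp' VO VP \<Longrightarrow> sameqf T vo' vp' S vo vp VO VP"
  unfolding sameqf_def by (elim conjE, intro conjI ballI allI impI; simp)

lemma sameqf_trans: "sameqf S1 v1 w1 S2 v2 w2 VO VP \<Longrightarrow> sameqf S2 v2 w2 S3 v3 w3 VO VP \<Longrightarrow> sameqf S1 v1 w1 S3 v3 w3 VO VP"
  unfolding sameqf_def by (elim conjE, intro conjI ballI allI impI; simp)

definition incar :: "('o,'p) pstr \<Rightarrow> (nat\<Rightarrow>'o) \<Rightarrow> (nat\<Rightarrow>'p) \<Rightarrow> nat set \<Rightarrow> nat set \<Rightarrow> bool" where
"incar S vo vp VO VP \<longleftrightarrow> (\<forall>l\<in>VO. vo l \<in> OS S) \<and> (\<forall>z\<in>VP. vp z \<in> PS S)"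

definition triples :: "nat \<Rightarrow> (nat\<Rightarrow>nat) \<Rightarrow> nat list \<Rightarrow> nat list \<Rightarrow> (nat \<times> nat \<times> nat list) list" where
"triples k ar xs zs = concat (map (\<lambda>i. List.product [i] (List.product zs (List.n_lists (ar i) xs))) [0..<k])"

lemma set_triples: "set (triples k ar xs zs) = {(i,z,ys). i<k \<and> z \<in> set zs \<and> length ys = ar i \<and> set ys \<subseteq> set xs}"
  unfolding triples_def by (auto simp: set_n_lists)

definition Diag :: "nat \<Rightarrow> (nat\<Rightarrow>nat) \<Rightarrow> ('o,'p) pstr \<Rightarrow> (nat\<Rightarrow>'o) \<Rightarrow> (nat\<Rightarrow>'p) \<Rightarrow> nat list \<Rightarrow> nat list \<Rightarrow> pfm" where
"Diag k ar S vo vp xs zs = conjs (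
    map (\<lambda>(l,l'). lit (vo l = vo l') (EqO l l')) (List.product xs xs) @
    map (\<lambda>(z,z'). lit (vp z = vp z') (EqP z z')) (List.product zs zs) @
    map (\<lambda>(i,z,ys). lit (PR S i (vp z) (map vo ys)) (Rel i z ys)) (triples k ar xs zs))"

lemma freeO_Diag: "freeO (Diag k ar S vo vp xs zs) \<subseteq> set xs"
  unfolding Diag_def by (auto simp: set_triples)

lemma freeP_Diag: "freeP (Diag k ar S vo vp xs zs) \<subseteq> set zs"
  unfolding Diag_def by (auto simp: set_triples)

lemma psat_Diag:
  assumes "wf_pstr k ar S" "wf_pstr k ar T"
  shows "psat T vo' vp' (Diag k ar S vo vp xs zs) = sameqf S vo vp T vo' vp' (set xs) (set zs)"
proof -
  have rel: "(\<forall>(i,z,ys)\<in>set (triples k ar xs zs). PR T i (vp' z) (map vo' ys) = PR S i (vp z) (map vo ys))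
     = (\<forall>i z ys. z\<in>set zs \<longrightarrow> set ys \<subseteq> set xs \<longrightarrow> (PR S i (vp z) (map vo ys) = PR T i (vp' z) (map vo' ys)))"
  proof
    assume h: "\<forall>(i,z,ys)\<in>set (triples k ar xs zs). PR T i (vp' z) (map vo' ys) = PR S i (vp z) (map vo ys)"
    show "\<forall>i z ys. z\<in>set zs \<longrightarrow> set ys \<subseteq> set xs \<longrightarrow> (PR S i (vp z) (map vo ys) = PR T i (vp' z) (map vo' ys))"
    proof (intro allI impI)
      fix i z ys assume z: "z \<in> set zs" and ys: "set ys \<subseteq> set xs"
      show "PR S i (vp z) (map vo ys) = PR T i (vp' z) (map vo' ys)"
      proof (cases "i < k \<and> length ys = ar i")
        case True
        then show ?thesis using h z ys by (auto simp: set_triples)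
      next
        case False
        then show ?thesis using assms unfolding wf_pstr_def by (metis length_map)
      qed
    qed
  qed (auto simp: set_triples)
  have 1: "(\<forall>p\<in>set (map (\<lambda>(l,l'). lit (vo l = vo l') (EqO l l')) (List.product xs xs)). psat T vo' vp' p)
     = (\<forall>l\<in>set xs. \<forall>l'\<in>set xs. (vo l = vo l') = (vo' l = vo' l'))" by auto
  have 2: "(\<forall>p\<in>set (map (\<lambda>(z,z'). lit (vp z = vp z') (EqP z z')) (List.product zs zs)). psat T vo' vp' p)
     = (\<forall>z\<in>set zs. \<forall>z'\<in>set zs. (vp z = vp z') = (vp' z = vp' z'))" by auto
  have 3: "(\<forall>p\<in>set (map (\<lambda>(i,z,ys). lit (PR S i (vp z) (map vo ys)) (Rel i z ys)) (triples k ar xs zs)). psat T vo' vp' p)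
     = (\<forall>(i,z,ys)\<in>set (triples k ar xs zs). PR T i (vp' z) (map vo' ys) = PR S i (vp z) (map vo ys))" by auto
  show ?thesis
    unfolding Diag_def psat_conjs set_append ball_Un 1 2 3 rel sameqf_def by blast
qed

definition piso :: "('o,'p) pstr \<Rightarrow> ('o2,'p2) pstr \<Rightarrow> 'o set \<Rightarrow> 'p set \<Rightarrow> ('o \<Rightarrow> 'o2) \<Rightarrow> ('p \<Rightarrow> 'p2) \<Rightarrow> bool" where
"piso S T U V fo fp \<longleftrightarrow> inj_on fo U \<and> fo ` U \<subseteq> OS T \<and> inj_on fp V \<and> fp ` V \<subseteq> PS T \<and>
   (\<forall>i. \<forall>b\<in>V. \<forall>ys. set ys \<subseteq> U \<longrightarrow> (PR S i b ys \<longleftrightarrow> PR T i (fp b) (map fo ys)))"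

lemma map_in_image: "set ys \<subseteq> f ` A \<Longrightarrow> \<exists>xs. set xs \<subseteq> A \<and> ys = map f xs"
proof (induction ys)
  case Nil then show ?case by auto
next
  case (Cons y ys)
  then obtain xs where "set xs \<subseteq> A" "ys = map f xs" by auto
  moreover obtain x where "x \<in> A" "y = f x" using Cons.prems by auto
  ultimately show ?case by (intro exI[of _ "x # xs"]) auto
qed

lemma piso_sameqf:
  assumes "piso S T U V fo fp"
    and "\<forall>l\<in>VO. vo l \<in> U \<and> vo' l = fo (vo l)"
    and "\<forall>z\<in>VP. vp z \<in> V \<and> vp' z = fp (vp z)"
  shows "sameqf S vo vp T vo' vp' VO VP"
proof -
  have injo: "inj_on fo U" and injp: "inj_on fp V" using assms(1) unfolding piso_def by auto
  have A: "\<forall>l\<in>VO. \<forall>l'\<in>VO. (vo l = vo l') = (vo' l = vo' l')"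
  proof (intro ballI)
    fix l l' assume "l \<in> VO" "l' \<in> VO"
    then show "(vo l = vo l') = (vo' l = vo' l')" using assms(2) inj_on_eq_iff[OF injo] by auto
  qed
  have B: "\<forall>z\<in>VP. \<forall>z'\<in>VP. (vp z = vp z') = (vp' z = vp' z')"
  proof (intro ballI)
    fix l l' assume "l \<in> VP" "l' \<in> VP"
    then show "(vp l = vp l') = (vp' l = vp' l')" using assms(3) inj_on_eq_iff[OF injp] by auto
  qed
  have C: "PR S i (vp z) (map vo ys) = PR T i (vp' z) (map vo' ys)"
    if "z\<in>VP" "set ys \<subseteq> VO" for i z ys
  proof -
    have eq: "map vo' ys = map fo (map vo ys)" using that assms(2) by auto
    have "set (map vo ys) \<subseteq> U" using that assms(2) by auto
    moreover have "vp z \<in> V" "vp' z = fp (vp z)" using assms(3) that by auto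
    ultimately have "PR S i (vp z) (map vo ys) = PR T i (fp (vp z)) (map fo (map vo ys))"
      using assms(1) unfolding piso_def by blast
    then show ?thesis by (simp only: eq \<open>vp' z = fp (vp z)\<close>)
  qed
  show ?thesis unfolding sameqf_def using A B C by blast
qed

lemma sameqf_piso:
  assumes sq: "sameqf S vo vp T vo' vp' VO VP" and ic: "incar T vo' vp' VO VP"
  shows "\<exists>fo fp. piso S T (vo ` VO) (vp ` VP) fo fp \<and> (\<forall>l\<in>VO. fo (vo l) = vo' l) \<and> (\<forall>z\<in>VP. fp (vp z) = vp' z)"
proof -
  define fo where "fo u = vo' (SOME l. l \<in> VO \<and> vo l = u)" for u
  define fp where "fp u = vp' (SOME l. l \<in> VP \<and> vp l = u)" for u
  have fo: "fo (vo l) = vo' l" if "l \<in> VO" for l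
  proof -
    have "\<exists>l'. l' \<in> VO \<and> vo l' = vo l" using that by blast
    then have "(SOME l'. l' \<in> VO \<and> vo l' = vo l) \<in> VO \<and> vo (SOME l'. l' \<in> VO \<and> vo l' = vo l) = vo l"
      by (rule someI_ex)
    then have "vo' (SOME l'. l' \<in> VO \<and> vo l' = vo l) = vo' l" using sq that unfolding sameqf_def by blast
    then show ?thesis unfolding fo_def .
  qed
  have fp: "fp (vp l) = vp' l" if "l \<in> VP" for l
  proof -
    have "\<exists>l'. l' \<in> VP \<and> vp l' = vp l" using that by blast
    then have "(SOME l'. l' \<in> VP \<and> vp l' = vp l) \<in> VP \<and> vp (SOME l'. l' \<in> VP \<and> vp l' = vp l) = vp l"
      by (rule someI_ex)
    then have "vp' (SOME l'. l' \<in> VP \<and> vp l' = vp l) = vp' l" using sq that unfolding sameqf_def by blast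
    then show ?thesis unfolding fp_def .
  qed
  have i1: "inj_on fo (vo ` VO)"
    unfolding inj_on_def using fo sq unfolding sameqf_def by auto
  have i2: "fo ` (vo ` VO) \<subseteq> OS T" using fo ic unfolding incar_def by auto
  have i3: "inj_on fp (vp ` VP)"
    unfolding inj_on_def using fp sq unfolding sameqf_def by auto
  have i4: "fp ` (vp ` VP) \<subseteq> PS T" using fp ic unfolding incar_def by auto
  have rel: "PR S i b ys \<longleftrightarrow> PR T i (fp b) (map fo ys)"
    if bb: "b \<in> vp ` VP" and yy: "set ys \<subseteq> vo ` VO" for i b ys
  proof -
    obtain z where z: "z \<in> VP" "b = vp z" using bb by blast
    obtain ls where ls: "set ls \<subseteq> VO" "ys = map vo ls" using map_in_image[OF yy] by auto
    have m: "map fo ys = map vo' ls" using ls fo by auto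
    have fpb: "fp b = vp' z" using fp z by simp
    have r: "PR S i (vp z) (map vo ls) = PR T i (vp' z) (map vo' ls)" using sq z ls unfolding sameqf_def by blast
    show ?thesis unfolding m fpb using r z(2) ls(2) by simp
  qed
  have "piso S T (vo ` VO) (vp ` VP) fo fp"
    unfolding piso_def
  proof (intro conjI allI ballI impI i1 i2 i3 i4)
    fix i b ys assume "b \<in> vp ` VP" "set ys \<subseteq> vo ` VO"
    then show "PR S i b ys = PR T i (fp b) (map fo ys)" by (rule rel)
  qed
  then show ?thesis using fo fp by (intro exI[of _ fo] exI[of _ fp]) auto
qed

lemma pautom_psat:
  assumes "pautom M go gp"
  shows "(\<forall>l\<in>freeO \<phi>. vo l \<in> OS M) \<Longrightarrow> (\<forall>z\<in>freeP \<phi>. vp z \<in> PS M) \<Longrightarrow>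
    psat M vo vp \<phi> = psat M (go \<circ> vo) (gp \<circ> vp) \<phi>"
proof (induction \<phi> arbitrary: vo vp)
  case (EqO i j)
  then show ?case using assms unfolding pautom_def pemb_def inj_on_def by auto
next
  case (EqP i j)
  then show ?case using assms unfolding pautom_def pemb_def inj_on_def by auto
next
  case (Rel i z ys)
  then have "vp z \<in> PS M" "set (map vo ys) \<subseteq> OS M" by auto
  then have "PR M i (vp z) (map vo ys) = PR M i (gp (vp z)) (map go (map vo ys))"
    using assms unfolding pautom_def pemb_def by blast
  then show ?case by (simp add: o_def)
next
  case (Neg p) then show ?case by simp
next
  case (Conj p q) then show ?case by simp
next
  case FF then show ?case by simp
next
  case (ExO v p)
  have go: "go ` OS M = OS M" and inj: "inj_on go (OS M)" using assms unfolding pautom_def pemb_def by auto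
  have IH: "psat M (vo(v:=c)) vp p = psat M ((go \<circ> vo)(v := go c)) (gp \<circ> vp) p" if "c \<in> OS M" for c
  proof -
    have "psat M (vo(v:=c)) vp p = psat M (go \<circ> (vo(v:=c))) (gp \<circ> vp) p"
      using ExO that by (intro ExO.IH) auto
    moreover have "go \<circ> (vo(v:=c)) = (go \<circ> vo)(v := go c)" by auto
    ultimately show ?thesis by simp
  qed
  show ?case
  proof
    assume "psat M vo vp (ExO v p)"
    then obtain c where "c \<in> OS M" "psat M (vo(v:=c)) vp p" by auto
    then show "psat M (go \<circ> vo) (gp \<circ> vp) (ExO v p)" using IH go by auto
  next
    assume "psat M (go \<circ> vo) (gp \<circ> vp) (ExO v p)"
    then obtain c' where "c' \<in> OS M" "psat M ((go \<circ> vo)(v:=c')) (gp \<circ> vp) p" by auto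
    moreover obtain c where "c \<in> OS M" "c' = go c" using go \<open>c' \<in> OS M\<close> by blast
    ultimately show "psat M vo vp (ExO v p)" using IH by auto
  qed
next
  case (ExP v p)
  have gp: "gp ` PS M = PS M" using assms unfolding pautom_def pemb_def by auto
  have IH: "psat M vo (vp(v:=c)) p = psat M (go \<circ> vo) ((gp \<circ> vp)(v := gp c)) p" if "c \<in> PS M" for c
  proof -
    have "psat M vo (vp(v:=c)) p = psat M (go \<circ> vo) (gp \<circ> (vp(v:=c))) p"
      using ExP that by (intro ExP.IH) auto
    moreover have "gp \<circ> (vp(v:=c)) = (gp \<circ> vp)(v := gp c)" by auto
    ultimately show ?thesis by simp
  qed
  show ?case
  proof
    assume "psat M vo vp (ExP v p)"
    then obtain c where "c \<in> PS M" "psat M vo (vp(v:=c)) p" by auto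
    then show "psat M (go \<circ> vo) (gp \<circ> vp) (ExP v p)" using IH gp by auto
  next
    assume "psat M (go \<circ> vo) (gp \<circ> vp) (ExP v p)"
    then obtain c' where "c' \<in> PS M" "psat M (go \<circ> vo) ((gp \<circ> vp)(v:=c')) p" by auto
    moreover obtain c where "c \<in> PS M" "c' = gp c" using gp \<open>c' \<in> PS M\<close> by blast
    ultimately show "psat M vo vp (ExP v p)" using IH by auto
  qed
qed




definition EE :: "(nat,nat) pstr \<Rightarrow> ('o,'p) pstr \<Rightarrow> bool" where
"EE M N \<longleftrightarrow> (\<forall>s. sentence s \<longrightarrow> (psat M (\<lambda>_. 0) (\<lambda>_. 0) s \<longleftrightarrow> psat N (\<lambda>_. undefined) (\<lambda>_. undefined) s))"

lemma ex_closure: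
  assumes "freeO p \<subseteq> set xs" "freeP p \<subseteq> set zs"
  shows "psat S v0 w0 (exOs xs (exPs zs p)) = (\<exists>vo vp. incar S vo vp (set xs) (set zs) \<and> psat S vo vp p)"
proof
  assume "psat S v0 w0 (exOs xs (exPs zs p))"
  then show "\<exists>vo vp. incar S vo vp (set xs) (set zs) \<and> psat S vo vp p"
    unfolding psat_exOs psat_exPs incar_def by blast
next
  assume "\<exists>vo vp. incar S vo vp (set xs) (set zs) \<and> psat S vo vp p"
  then obtain vo vp where h: "incar S vo vp (set xs) (set zs)" "psat S vo vp p" by blast
  define vo' where "vo' l = (if l \<in> set xs then vo l else v0 l)" for l
  define vp' where "vp' l = (if l \<in> set zs then vp l else w0 l)" for l
  have "psat S vo' vp' p = psat S vo vp p"
    using assms by (intro psat_cong) (auto simp: vo'_def vp'_def)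
  then have "psat S vo' vp' p" using h by simp
  then show "psat S v0 w0 (exOs xs (exPs zs p))"
    unfolding psat_exOs psat_exPs
    using h(1) unfolding incar_def
    by (intro exI[of _ vo'] conjI exI[of _ vp']) (auto simp: vo'_def vp'_def)
qed

lemma transfer_ex:
  assumes "EE M N" "finite VO" "finite VP" "freeO p \<subseteq> VO" "freeP p \<subseteq> VP"
  shows "(\<exists>vo vp. incar N vo vp VO VP \<and> psat N vo vp p) = (\<exists>vo vp. incar M vo vp VO VP \<and> psat M vo vp p)"
proof -
  obtain xs where xs: "set xs = VO" using assms(2) finite_list by blast
  obtain zs where zs: "set zs = VP" using assms(3) finite_list by blast
  define s where "s = exOs xs (exPs zs p)"
  have "sentence s" unfolding s_def sentence_def using assms xs zs by auto
  then have "psat M (\<lambda>_. 0) (\<lambda>_. 0) s = psat N (\<lambda>_. undefined) (\<lambda>_. undefined) s"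
    using assms(1) unfolding EE_def by blast
  then show ?thesis unfolding s_def
    using ex_closure[of p xs zs M "\<lambda>_. 0" "\<lambda>_. 0"] ex_closure[of p xs zs N "\<lambda>_. undefined" "\<lambda>_. undefined"] assms xs zs by simp
qed

lemma uhom:
  assumes FL: "fraisse_limit_pfc k ar K M"
    and sq: "sameqf M vo vp M vo' vp' VO VP"
    and ic: "incar M vo vp VO VP" and ic': "incar M vo' vp' VO VP"
    and fin: "finite VO" "finite VP"
  shows "\<exists>go gp. pautom M go gp \<and> (\<forall>l\<in>VO. go (vo l) = vo' l) \<and> (\<forall>z\<in>VP. gp (vp z) = vp' z)"
proof -
  obtain fo fp where f: "piso M M (vo ` VO) (vp ` VP) fo fp" "\<forall>l\<in>VO. fo (vo l) = vo' l" "\<forall>z\<in>VP. fp (vp z) = vp' z"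
    using sameqf_piso[OF sq ic'] by blast
  have U: "vo ` VO \<subseteq> OS M" "vp ` VP \<subseteq> PS M" using ic unfolding incar_def by auto
  have "pemb (psub M (vo ` VO) (vp ` VP)) M fo fp"
    using f(1) unfolding pemb_def psub_def piso_def by auto
  then obtain go gp where "pautom M go gp" "\<forall>u\<in>vo ` VO. go u = fo u" "\<forall>v\<in>vp ` VP. gp v = fp v"
    using FL U fin unfolding fraisse_limit_pfc_def by (metis finite_imageI)
  then show ?thesis using f by auto
qed

lemma wf_of_FL: "fraisse_limit_pfc k ar K M \<Longrightarrow> wf_pstr k ar M"
  unfolding fraisse_limit_pfc_def by blast

lemma cross1:
  assumes wfN: "wf_pstr k ar N" and FL: "fraisse_limit_pfc k ar K M" and EE: "EE M N"
    and sq: "sameqf N vo vp M vo' vp' VO VP"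
    and ic: "incar N vo vp VO VP" and ic': "incar M vo' vp' VO VP"
    and fin: "finite VO" "finite VP"
    and fr: "freeO \<phi> \<subseteq> VO" "freeP \<phi> \<subseteq> VP"
    and sat: "psat N vo vp \<phi>"
  shows "psat M vo' vp' \<phi>"
proof -
  have wfM: "wf_pstr k ar M" using FL by (rule wf_of_FL)
  obtain xs where xs: "set xs = VO" using fin(1) finite_list by blast
  obtain zs where zs: "set zs = VP" using fin(2) finite_list by blast
  define p where "p = Conj (Diag k ar N vo vp xs zs) \<phi>"
  have frp: "freeO p \<subseteq> VO" "freeP p \<subseteq> VP"
    unfolding p_def using fr freeO_Diag[of k ar N vo vp xs zs] freeP_Diag[of k ar N vo vp xs zs] xs zs by auto
  have "psat N vo vp p" unfolding p_def using sat psat_Diag[OF wfN wfN] sameqf_refl by simp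
  then have "\<exists>vo vp. incar N vo vp VO VP \<and> psat N vo vp p" using ic by blast
  then obtain vo'' vp'' where h: "incar M vo'' vp'' VO VP" "psat M vo'' vp'' p"
    using transfer_ex[OF EE fin frp] by blast
  have sq2: "sameqf N vo vp M vo'' vp'' VO VP" and s2: "psat M vo'' vp'' \<phi>"
    using h(2) psat_Diag[OF wfN wfM] xs zs unfolding p_def by auto
  have "sameqf M vo'' vp'' M vo' vp' VO VP"
    using sameqf_trans[OF sameqf_sym[OF sq2] sq] .
  then obtain go gp where g: "pautom M go gp" "\<forall>l\<in>VO. go (vo'' l) = vo' l" "\<forall>z\<in>VP. gp (vp'' z) = vp' z"
    using uhom[OF FL _ h(1) ic' fin] by blast
  have "psat M vo'' vp'' \<phi> = psat M (go \<circ> vo'') (gp \<circ> vp'') \<phi>"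
    using pautom_psat[OF g(1)] h(1) fr unfolding incar_def by blast
  also have "\<dots> = psat M vo' vp' \<phi>"
    using g fr by (intro psat_cong) auto
  finally show ?thesis using s2 by simp
qed

lemma cross_qe:
  assumes wfN: "wf_pstr k ar N" and FL: "fraisse_limit_pfc k ar K M" and EE: "EE M N"
    and sq: "sameqf N vo vp M vo' vp' VO VP"
    and ic: "incar N vo vp VO VP" and ic': "incar M vo' vp' VO VP"
    and fin: "finite VO" "finite VP"
    and fr: "freeO \<phi> \<subseteq> VO" "freeP \<phi> \<subseteq> VP"
  shows "psat N vo vp \<phi> = psat M vo' vp' \<phi>"
proof
  assume "psat N vo vp \<phi>"
  then show "psat M vo' vp' \<phi>" using cross1[OF assms] by blast
next
  assume m: "psat M vo' vp' \<phi>"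
  show "psat N vo vp \<phi>"
  proof (rule ccontr)
    assume "\<not> psat N vo vp \<phi>"
    then have "psat N vo vp (Neg \<phi>)" by simp
    then have "psat M vo' vp' (Neg \<phi>)" using cross1[OF wfN FL EE sq ic ic' fin, of "Neg \<phi>"] fr by simp
    then show False using m by simp
  qed
qed

lemma realize:
  assumes wfN: "wf_pstr k ar N" and FL: "fraisse_limit_pfc k ar K M" and EE: "EE M N"
    and ic: "incar N vo vp VO VP" and fin: "finite VO" "finite VP"
  shows "\<exists>vo' vp'. incar M vo' vp' VO VP \<and> sameqf N vo vp M vo' vp' VO VP"
proof -
  have wfM: "wf_pstr k ar M" using FL by (rule wf_of_FL)
  obtain xs where xs: "set xs = VO" using fin(1) finite_list by blast
  obtain zs where zs: "set zs = VP" using fin(2) finite_list by blast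
  define p where "p = Diag k ar N vo vp xs zs"
  have frp: "freeO p \<subseteq> VO" "freeP p \<subseteq> VP"
    unfolding p_def using freeO_Diag[of k ar N vo vp xs zs] freeP_Diag[of k ar N vo vp xs zs] xs zs by auto
  have "psat N vo vp p" unfolding p_def using psat_Diag[OF wfN wfN] sameqf_refl by simp
  then have "\<exists>vo vp. incar N vo vp VO VP \<and> psat N vo vp p" using ic by blast
  then obtain vo'' vp'' where h: "incar M vo'' vp'' VO VP" "psat M vo'' vp'' p"
    using transfer_ex[OF EE fin frp] by blast
  then show ?thesis using psat_Diag[OF wfN wfM] xs zs unfolding p_def by auto
qed




lemma FC_parts:
  assumes "fraisse_class k ar K"
  shows FC_wf: "\<And>S. S\<in>K \<Longrightarrow> finite (fst S) \<and> wf_str k ar S"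
    and FC_iso: "\<And>S S'. S\<in>K \<Longrightarrow> wf_str k ar S' \<Longrightarrow> isomorphic_str S S' \<Longrightarrow> S' \<in> K"
    and FC_her: "\<And>S U. S\<in>K \<Longrightarrow> U \<subseteq> fst S \<Longrightarrow> substr S U \<in> K"
proof -
  have h1: "(\<forall>S\<in>K. finite (fst S) \<and> wf_str k ar S)"
    using assms unfolding fraisse_class_def by (elim conjE) assumption
  have h2: "(\<forall>S\<in>K. \<forall>S'. wf_str k ar S' \<and> isomorphic_str S S' \<longrightarrow> S' \<in> K)"
    using assms unfolding fraisse_class_def by (elim conjE) assumption
  have h3: "(\<forall>S\<in>K. \<forall>U. U \<subseteq> fst S \<longrightarrow> substr S U \<in> K)"
    using assms unfolding fraisse_class_def by (elim conjE) assumption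
  note h = h1 h2 h3
  show "\<And>S. S\<in>K \<Longrightarrow> finite (fst S) \<and> wf_str k ar S" using h(1) by blast
  show "\<And>S S'. S\<in>K \<Longrightarrow> wf_str k ar S' \<Longrightarrow> isomorphic_str S S' \<Longrightarrow> S' \<in> K" using h(2) by blast
  show "\<And>S U. S\<in>K \<Longrightarrow> U \<subseteq> fst S \<Longrightarrow> substr S U \<in> K" using h(3) by blast
qed

lemma FL_parts:
  assumes "fraisse_limit_pfc k ar K M"
  shows FL_age: "\<And>U V. U \<subseteq> OS M \<Longrightarrow> V \<subseteq> PS M \<Longrightarrow> finite U \<Longrightarrow> finite V \<Longrightarrow> in_Kpfc k ar K (psub M U V)"
    and FL_univ: "\<And>S :: (nat, nat) pstr. in_Kpfc k ar K S \<Longrightarrow> (\<exists>fo fp. pemb S M fo fp)"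
    and FL_hom: "\<And>U V fo fp. U \<subseteq> OS M \<Longrightarrow> V \<subseteq> PS M \<Longrightarrow> finite U \<Longrightarrow> finite V \<Longrightarrow> pemb (psub M U V) M fo fp
        \<Longrightarrow> (\<exists>go gp. pautom M go gp \<and> (\<forall>u\<in>U. go u = fo u) \<and> (\<forall>v\<in>V. gp v = fp v))"
proof -
  have h1: "(\<forall>U V. U \<subseteq> OS M \<and> V \<subseteq> PS M \<and> finite U \<and> finite V \<longrightarrow> in_Kpfc k ar K (psub M U V))"
    using assms unfolding fraisse_limit_pfc_def by (elim conjE) assumption
  have h2: "(\<forall>S :: (nat, nat) pstr. in_Kpfc k ar K S \<longrightarrow> (\<exists>fo fp. pemb S M fo fp))"
    using assms unfolding fraisse_limit_pfc_def by (elim conjE) assumption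
  have h3: "(\<forall>U V fo fp. U \<subseteq> OS M \<and> V \<subseteq> PS M \<and> finite U \<and> finite V \<and> pemb (psub M U V) M fo fp
        \<longrightarrow> (\<exists>go gp. pautom M go gp \<and> (\<forall>u\<in>U. go u = fo u) \<and> (\<forall>v\<in>V. gp v = fp v)))"
    using assms unfolding fraisse_limit_pfc_def by (elim conjE) assumption
  note h = h1 h2 h3
  show "\<And>U V. U \<subseteq> OS M \<Longrightarrow> V \<subseteq> PS M \<Longrightarrow> finite U \<Longrightarrow> finite V \<Longrightarrow> in_Kpfc k ar K (psub M U V)"
    using h(1) by blast
  show "\<And>S :: (nat, nat) pstr. in_Kpfc k ar K S \<Longrightarrow> (\<exists>fo fp. pemb S M fo fp)" using h(2) by blast
  show "\<And>U V fo fp. U \<subseteq> OS M \<Longrightarrow> V \<subseteq> PS M \<Longrightarrow> finite U \<Longrightarrow> finite V \<Longrightarrow> pemb (psub M U V) M fo fp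
        \<Longrightarrow> (\<exists>go gp. pautom M go gp \<and> (\<forall>u\<in>U. go u = fo u) \<and> (\<forall>v\<in>V. gp v = fp v))"
    using h(3) by blast
qed

lemma iso_sym: "isomorphic_str S S' \<Longrightarrow> isomorphic_str S' S"
proof -
  assume "isomorphic_str S S'"
  then obtain f where f: "emb_str S S' f" "f ` fst S = fst S'" unfolding isomorphic_str_def by blast
  have inj: "inj_on f (fst S)" using f unfolding emb_str_def by blast
  define g where "g = the_inv_into (fst S) f"
  have g1: "inj_on g (fst S')" unfolding g_def using inj_on_the_inv_into[OF inj] f(2) by simp
  have g2: "g ` fst S' = fst S" unfolding g_def using the_inv_into_onto[OF inj] f(2) by simp
  have g3: "f (g y) = y" if "y \<in> fst S'" for y
  proof -
    have "y \<in> f ` fst S" using that f(2) by simp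
    then show ?thesis unfolding g_def by (rule f_the_inv_into_f[OF inj])
  qed
  have "snd S' i xs = snd S i (map g xs)" if "set xs \<subseteq> fst S'" for i xs
  proof -
    have "set (map g xs) \<subseteq> fst S" using g2 that by auto
    then have "snd S i (map g xs) = snd S' i (map f (map g xs))" using f(1) unfolding emb_str_def by blast
    moreover have "map f (map g xs) = xs" using g3 that by (induction xs) auto
    ultimately show ?thesis by simp
  qed
  then have "emb_str S' S g" unfolding emb_str_def using g1 g2 by auto
  then show "isomorphic_str S' S" unfolding isomorphic_str_def using g2 by blast
qed

definition FB :: "(nat,nat) pstr \<Rightarrow> nat set \<Rightarrow> nat \<Rightarrow> nat str" where
"FB M U b = (U, \<lambda>i ys. PR M i b ys \<and> set ys \<subseteq> U)"

lemma FB_in_K: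
  assumes FC: "fraisse_class k ar K" and FL: "fraisse_limit_pfc k ar K M"
    and U: "finite U" "U \<subseteq> OS M" and b: "b \<in> PS M"
  shows "FB M U b \<in> K"
proof -
  have "in_Kpfc k ar K (psub M U {b})" using FL_age[OF FL U(2) _ U(1)] b by simp
  then have "\<forall>b'\<in>PS (psub M U {b}). \<exists>S\<in>K. isomorphic_str (fiber (psub M U {b}) b') S"
    unfolding in_Kpfc_def by blast
  then obtain S where S: "S \<in> K" "isomorphic_str (fiber (psub M U {b}) b) S"
    unfolding psub_def by auto
  have "fiber (psub M U {b}) b = FB M U b" unfolding fiber_def psub_def FB_def by auto
  then have iso: "isomorphic_str S (FB M U b)" using S(2) iso_sym by simp
  have wf: "wf_str k ar (FB M U b)" using wf_of_FL[OF FL] unfolding wf_str_def wf_pstr_def FB_def by auto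
  show ?thesis using FC_iso[OF FC S(1) wf iso] .
qed




lemma amalg_ext:
  fixes n :: nat
  assumes FC: "fraisse_class k ar K" and SP: "SAP K" and FL: "fraisse_limit_pfc k ar K M"
    and XM: "finite XM" "XM \<subseteq> OS M"
    and bM: "\<forall>j<n. bM j \<in> PS M" "inj_on bM {..<n}"
    and A: "\<forall>j<n. A j \<subseteq> XM"
    and c: "\<forall>j<n. c j \<in> OS M \<and> c j \<notin> A j"
  shows "\<exists>cM\<in>OS M. cM \<notin> XM \<and> (\<forall>j<n. \<forall>i ys. set ys \<subseteq> insert (c j) (A j) \<longrightarrow>
            (PR M i (bM j) ys \<longleftrightarrow> PR M i (bM j) (map (\<lambda>x. if x = c j then cM else x) ys)))"
proof -
  define P where "P j (Dj :: nat str) (gj :: nat \<Rightarrow> nat) (hj :: nat \<Rightarrow> nat) \<longleftrightarrow> emb_str (FB M XM (bM j)) Dj gj \<and> emb_str (FB M (insert (c j) (A j)) (bM j)) Dj hj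
      \<and> (\<forall>x\<in>A j. gj x = hj x) \<and> gj ` XM \<inter> hj ` insert (c j) (A j) = gj ` A j" for j Dj gj hj
  have sap: "\<forall>j\<in>{..<n}. \<exists>Dj. Dj \<in> K \<and> (\<exists>gj hj. P j Dj gj hj)"
  proof
    fix j assume "j \<in> {..<n}"
    then have j: "j < n" by simp
    have fA: "finite (A j)" "A j \<subseteq> OS M" using A XM j finite_subset by blast+
    have KA: "FB M (A j) (bM j) \<in> K" using FB_in_K[OF FC FL fA] bM j by blast
    have KB: "FB M XM (bM j) \<in> K" using FB_in_K[OF FC FL XM] bM j by blast
    have KC: "FB M (insert (c j) (A j)) (bM j) \<in> K" using FB_in_K[OF FC FL] fA c bM j by auto
    have eB: "emb_str (FB M (A j) (bM j)) (FB M XM (bM j)) id"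
      unfolding emb_str_def FB_def using A j by auto
    have eC: "emb_str (FB M (A j) (bM j)) (FB M (insert (c j) (A j)) (bM j)) id"
      unfolding emb_str_def FB_def by auto
    obtain Dj gj hj where o1: "Dj \<in> K" and o2: "emb_str (FB M XM (bM j)) Dj gj" and o3: "emb_str (FB M (insert (c j) (A j)) (bM j)) Dj hj"
      and o4: "\<forall>x\<in>fst (FB M (A j) (bM j)). gj (id x) = hj (id x)"
      and o5: "gj ` fst (FB M XM (bM j)) \<inter> hj ` fst (FB M (insert (c j) (A j)) (bM j)) = (gj \<circ> id) ` fst (FB M (A j) (bM j))"
    proof -
      have "\<forall>A\<in>K. \<forall>B\<in>K. \<forall>C\<in>K. \<forall>e f. emb_str A B e \<and> emb_str A C f \<longrightarrow>
        (\<exists>D\<in>K. \<exists>g h. emb_str B D g \<and> emb_str C D h \<and>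
            (\<forall>x\<in>fst A. g (e x) = h (f x)) \<and>
            g ` fst B \<inter> h ` fst C = (g \<circ> e) ` fst A)" using SP unfolding SAP_def by blast
      then have "\<exists>D\<in>K. \<exists>g h. emb_str (FB M XM (bM j)) D g \<and> emb_str (FB M (insert (c j) (A j)) (bM j)) D h \<and>
            (\<forall>x\<in>fst (FB M (A j) (bM j)). g (id x) = h (id x)) \<and>
            g ` fst (FB M XM (bM j)) \<inter> h ` fst (FB M (insert (c j) (A j)) (bM j)) = (g \<circ> id) ` fst (FB M (A j) (bM j))"
        using KA KB KC eB eC by blast
      then show ?thesis using that by blast
    qed
    have o4': "\<forall>x\<in>A j. gj x = hj x" using o4 unfolding FB_def by simp
    have o5': "gj ` XM \<inter> hj ` insert (c j) (A j) = gj ` A j" using o5 unfolding FB_def by simp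
    have "P j Dj gj hj" unfolding P_def using o2 o3 o4' o5' by blast
    then show "\<exists>Dj. Dj \<in> K \<and> (\<exists>gj hj. P j Dj gj hj)" using o1 by blast
  qed
  obtain D where D: "\<forall>j\<in>{..<n}. D j \<in> K \<and> (\<exists>gj hj. P j (D j) gj hj)" using bchoice[OF sap] by blast
  then have "\<forall>j\<in>{..<n}. \<exists>gj. \<exists>hj. P j (D j) gj hj" by blast
  then obtain g where "\<forall>j\<in>{..<n}. \<exists>hj. P j (D j) (g j) hj" using bchoice by metis
  then obtain h where Pj: "\<forall>j\<in>{..<n}. P j (D j) (g j) (h j)" using bchoice by metis
  obtain new :: nat where new: "new \<notin> XM" using ex_new_if_finite[OF infinite_UNIV_nat XM(1)] by blast
  define \<pi> where "\<pi> j x = (if x = new then h j (c j) else g j x)" for j x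
  define OE where "OE = insert new XM"
  define YM where "YM = bM ` {..<n}"
  define E :: "(nat, nat) pstr" where "E = \<lparr>OS = OE, PS = YM,
     PR = (\<lambda>i b ys. set ys \<subseteq> OE \<and> (\<exists>j<n. b = bM j \<and> snd (D j) i (map (\<pi> j) ys)))\<rparr>"
  have DK: "D j \<in> K" if "j < n" for j using D that by auto
  have gemb: "emb_str (FB M XM (bM j)) (D j) (g j)" if "j < n" for j using Pj that unfolding P_def by auto
  have hemb: "emb_str (FB M (insert (c j) (A j)) (bM j)) (D j) (h j)" if "j < n" for j using Pj that unfolding P_def by auto
  have gh: "\<forall>x\<in>A j. g j x = h j x" if "j < n" for j using Pj that unfolding P_def by auto
  have strong: "g j ` XM \<inter> h j ` insert (c j) (A j) = g j ` A j" if "j < n" for j using Pj that unfolding P_def by auto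
  have k1: "inj_on (\<pi> j) OE \<and> \<pi> j ` OE \<subseteq> fst (D j)" if j: "j < n" for j
  proof -
    have ginj: "inj_on (g j) XM" "g j ` XM \<subseteq> fst (D j)" using gemb[OF j] unfolding emb_str_def FB_def by auto
    have hinj: "inj_on (h j) (insert (c j) (A j))" "h j ` insert (c j) (A j) \<subseteq> fst (D j)"
      using hemb[OF j] unfolding emb_str_def FB_def by auto
    have notin: "h j (c j) \<notin> g j ` XM"
    proof
      assume "h j (c j) \<in> g j ` XM"
      then have "h j (c j) \<in> g j ` A j" using strong[OF j] by blast
      then obtain a where a: "a \<in> A j" "h j (c j) = g j a" by blast
      then have "h j (c j) = h j a" using gh[OF j] by auto
      then have "c j = a" using hinj(1) a(1) unfolding inj_on_def by blast
      then show False using c j a(1) by auto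
    qed
    have eqg: "\<pi> j x = g j x" if "x \<in> XM" for x using that new unfolding \<pi>_def by auto
    have "inj_on (\<pi> j) XM" using inj_on_cong[of XM "\<pi> j" "g j"] eqg ginj(1) by blast
    moreover have "\<pi> j new \<notin> \<pi> j ` XM" using notin eqg unfolding \<pi>_def by (auto simp: image_iff)
    ultimately have "inj_on (\<pi> j) OE" unfolding OE_def using new by (simp add: inj_on_insert)
    moreover have "\<pi> j ` OE \<subseteq> fst (D j)" unfolding OE_def using eqg ginj(2) hinj(2) unfolding \<pi>_def by auto
    ultimately show ?thesis by blast
  qed
  have k2: "PR E i (bM j) ys \<longleftrightarrow> set ys \<subseteq> OE \<and> snd (D j) i (map (\<pi> j) ys)" if j: "j < n" for j i ys
  proof -
    have "\<And>j'. j' < n \<Longrightarrow> bM j = bM j' \<Longrightarrow> j' = j" using bM(2) j unfolding inj_on_def by auto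
    then show ?thesis unfolding E_def using j by auto
  qed
  have k4: "PR E i (bM j) ys \<longleftrightarrow> PR M i (bM j) ys" if j: "j < n" and ys: "set ys \<subseteq> XM" for j i ys
  proof -
    have m: "map (\<pi> j) ys = map (g j) ys" using ys new unfolding \<pi>_def by auto
    have e: "(PR M i (bM j) ys \<and> set ys \<subseteq> XM) = snd (D j) i (map (g j) ys)"
      using gemb[OF j] ys unfolding emb_str_def FB_def by auto
    have k2': "PR E i (bM j) ys \<longleftrightarrow> set ys \<subseteq> OE \<and> snd (D j) i (map (g j) ys)"
      using k2[OF j, of i ys] unfolding m .
    show ?thesis using k2' e ys unfolding OE_def by auto
  qed
  define sw where "sw j x = (if x = c j then new else x)" for j x
  have k5: "PR E i (bM j) (map (sw j) ys) \<longleftrightarrow> PR M i (bM j) ys" if j: "j < n" and ys: "set ys \<subseteq> insert (c j) (A j)" for j i ys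
  proof -
    have m: "map (\<pi> j) (map (sw j) ys) = map (h j) ys"
    proof -
      have "\<pi> j (sw j x) = h j x" if "x \<in> set ys" for x
      proof (cases "x = c j")
        case True then show ?thesis unfolding \<pi>_def sw_def by simp
      next
        case False
        then have "x \<in> A j" using that ys by auto
        moreover then have "x \<noteq> new" using A j new by auto
        ultimately show ?thesis using False gh[OF j] unfolding \<pi>_def sw_def by simp
      qed
      then show ?thesis by simp
    qed
    have e: "(PR M i (bM j) ys \<and> set ys \<subseteq> insert (c j) (A j)) = snd (D j) i (map (h j) ys)"
      using hemb[OF j] ys unfolding emb_str_def FB_def by auto
    have s: "set (map (sw j) ys) \<subseteq> OE" using ys A j unfolding sw_def OE_def by auto
    have k2': "PR E i (bM j) (map (sw j) ys) \<longleftrightarrow> set (map (sw j) ys) \<subseteq> OE \<and> snd (D j) i (map (h j) ys)"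
      using k2[OF j, of i "map (sw j) ys"] unfolding m .
    show ?thesis using k2' e s ys by blast
  qed
  have EK: "in_Kpfc k ar K E"
  proof -
    have fin: "finite (OS E)" "finite (PS E)" unfolding E_def OE_def YM_def using XM by (auto intro: finite_imageI)
    have wf: "wf_pstr k ar E"
      unfolding wf_pstr_def
    proof (intro allI impI)
      fix i b ys assume pr: "PR E i b ys"
      then obtain j where j: "j < n" "b = bM j" "snd (D j) i (map (\<pi> j) ys)" "set ys \<subseteq> OE" unfolding E_def by auto
      have "wf_str k ar (D j)" using FC_wf[OF FC DK[OF j(1)]] by blast
      then have "i < k \<and> length (map (\<pi> j) ys) = ar i" using j(3) unfolding wf_str_def by blast
      then show "i < k \<and> b \<in> PS E \<and> length ys = ar i \<and> set ys \<subseteq> OS E"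
        using j unfolding E_def YM_def by auto
    qed
    have fib: "\<exists>S\<in>K. isomorphic_str (fiber E b) S" if b: "b \<in> PS E" for b
    proof -
      obtain j where j: "j < n" "b = bM j" using b unfolding E_def YM_def by auto
      define S where "S = substr (D j) (\<pi> j ` OE)"
      have "S \<in> K" unfolding S_def using FC_her[OF FC DK[OF j(1)]] k1[OF j(1)] by blast
      moreover have "emb_str (fiber E b) S (\<pi> j)"
        unfolding emb_str_def
      proof (intro conjI allI impI)
        show "inj_on (\<pi> j) (fst (fiber E b))" using k1[OF j(1)] unfolding fiber_def E_def by simp
        show "\<pi> j ` fst (fiber E b) \<subseteq> fst S" unfolding fiber_def E_def S_def substr_def by simp
        fix i xs assume "set xs \<subseteq> fst (fiber E b)"
        then have xs: "set xs \<subseteq> OE" unfolding fiber_def E_def by simp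
        show "snd (fiber E b) i xs = snd S i (map (\<pi> j) xs)"
          unfolding fiber_def S_def substr_def using k2[OF j(1)] xs j(2) by auto
      qed
      moreover have "\<pi> j ` fst (fiber E b) = fst S" unfolding fiber_def E_def S_def substr_def by simp
      ultimately show ?thesis unfolding isomorphic_str_def by blast
    qed
    show ?thesis unfolding in_Kpfc_def using fin wf fib by blast
  qed
  obtain fo fp where pe: "pemb E M fo fp" using FL_univ[OF FL EK] by blast
  have foinj: "inj_on fo OE" and foim: "fo ` OE \<subseteq> OS M" and fpinj: "inj_on fp YM" and fpim: "fp ` YM \<subseteq> PS M"
    and perel: "\<And>i b ys. b \<in> YM \<Longrightarrow> set ys \<subseteq> OE \<Longrightarrow> PR E i b ys \<longleftrightarrow> PR M i (fp b) (map fo ys)"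
    using pe unfolding pemb_def E_def by auto
  have foinjX: "inj_on fo XM" using foinj unfolding OE_def by (rule inj_on_subset) auto
  define FO where "FO = the_inv_into XM fo"
  define FP where "FP = the_inv_into YM fp"
  have FOf: "FO (fo x) = x" if "x \<in> XM" for x unfolding FO_def using the_inv_into_f_f[OF foinjX that] .
  have FPf: "FP (fp x) = x" if "x \<in> YM" for x unfolding FP_def using the_inv_into_f_f[OF fpinj that] .
  have pe2: "pemb (psub M (fo ` XM) (fp ` YM)) M FO FP"
    unfolding pemb_def
  proof (intro conjI ballI allI impI)
    show "inj_on FO (OS (psub M (fo ` XM) (fp ` YM)))" unfolding psub_def FO_def using inj_on_the_inv_into[OF foinjX] by simp
    show "FO ` OS (psub M (fo ` XM) (fp ` YM)) \<subseteq> OS M" unfolding psub_def FO_def using the_inv_into_onto[OF foinjX] XM by simp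
    show "inj_on FP (PS (psub M (fo ` XM) (fp ` YM)))" unfolding psub_def FP_def using inj_on_the_inv_into[OF fpinj] by simp
    show "FP ` PS (psub M (fo ` XM) (fp ` YM)) \<subseteq> PS M" unfolding psub_def FP_def using the_inv_into_onto[OF fpinj] bM(1) YM_def by auto
    fix i v ys assume v: "v \<in> PS (psub M (fo ` XM) (fp ` YM))" and ys: "set ys \<subseteq> OS (psub M (fo ` XM) (fp ` YM))"
    obtain b where b: "b \<in> YM" "v = fp b" using v unfolding psub_def by auto
    then obtain j where j: "j < n" "b = bM j" unfolding YM_def by auto
    obtain xs where xs: "set xs \<subseteq> XM" "ys = map fo xs" using map_in_image ys unfolding psub_def by force
    have "map FO ys = xs" using xs FOf by (induction xs arbitrary: ys) auto
    moreover have "FP v = b" using b FPf by simp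
    moreover have "PR (psub M (fo ` XM) (fp ` YM)) i v ys = PR M i (fp b) (map fo xs)"
      using v ys b xs unfolding psub_def by auto
    moreover have "PR M i (fp b) (map fo xs) = PR E i b xs" using perel[OF b(1)] xs unfolding OE_def by auto
    moreover have "PR E i b xs = PR M i b xs" using k4[OF j(1) xs(1)] j(2) by simp
    ultimately show "PR (psub M (fo ` XM) (fp ` YM)) i v ys = PR M i (FP v) (map FO ys)" by simp
  qed
  have UV: "fo ` XM \<subseteq> OS M" "fp ` YM \<subseteq> PS M" "finite (fo ` XM)" "finite (fp ` YM)"
    using foim fpim XM unfolding OE_def YM_def by auto
  obtain go gp where g: "pautom M go gp" "\<forall>u\<in>fo ` XM. go u = FO u" "\<forall>v\<in>fp ` YM. gp v = FP v"
    using FL_hom[OF FL UV pe2] by blast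
  have gox: "go (fo x) = x" if "x \<in> XM" for x using g(2) FOf that by auto
  have gpb: "gp (fp b) = b" if "b \<in> YM" for b using g(3) FPf that by auto
  have goinj: "inj_on go (OS M)" and goim: "go ` OS M = OS M"
    and grel: "\<And>i b ys. b \<in> PS M \<Longrightarrow> set ys \<subseteq> OS M \<Longrightarrow> PR M i b ys \<longleftrightarrow> PR M i (gp b) (map go ys)"
    using g(1) unfolding pautom_def pemb_def by auto
  define cM where "cM = go (fo new)"
  have fonew: "fo new \<in> OS M" using foim unfolding OE_def by auto
  have cM1: "cM \<in> OS M" unfolding cM_def using goim fonew by auto
  have cM2: "cM \<notin> XM"
  proof
    assume x: "cM \<in> XM"
    then have "go (fo new) = go (fo cM)" using gox unfolding cM_def by simp
    moreover have "fo cM \<in> OS M" using foim x unfolding OE_def by auto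
    ultimately have "fo new = fo cM" using goinj fonew unfolding inj_on_def by blast
    then have "new = cM" using foinj x unfolding OE_def inj_on_def by blast
    then show False using x new by simp
  qed
  have cM3: "PR M i (bM j) ys \<longleftrightarrow> PR M i (bM j) (map (\<lambda>x. if x = c j then cM else x) ys)"
    if j: "j < n" and ys: "set ys \<subseteq> insert (c j) (A j)" for j i ys
  proof -
    define ys' where "ys' = map (sw j) ys"
    have ys'OE: "set ys' \<subseteq> OE" using ys A j unfolding ys'_def sw_def OE_def by auto
    have m: "map (\<lambda>x. if x = c j then cM else x) ys = map go (map fo ys')"
    proof -
      have "(if x = c j then cM else x) = go (fo (sw j x))" if "x \<in> set ys" for x
      proof (cases "x = c j")
        case True then show ?thesis unfolding cM_def sw_def by simp
      next
        case False
        then have "x \<in> XM" using that ys A j by auto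
        then show ?thesis using False gox unfolding sw_def by simp
      qed
      then show ?thesis unfolding ys'_def by simp
    qed
    have bYM: "bM j \<in> YM" unfolding YM_def using j by simp
    have "fp (bM j) \<in> PS M" using fpim bYM by auto
    moreover have "set (map fo ys') \<subseteq> OS M" using ys'OE foim by auto
    ultimately have "PR M i (fp (bM j)) (map fo ys') \<longleftrightarrow> PR M i (gp (fp (bM j))) (map go (map fo ys'))"
      using grel by blast
    also have "\<dots> \<longleftrightarrow> PR M i (bM j) (map (\<lambda>x. if x = c j then cM else x) ys)" using m gpb[OF bYM] by simp
    finally have 1: "PR M i (fp (bM j)) (map fo ys') \<longleftrightarrow> PR M i (bM j) (map (\<lambda>x. if x = c j then cM else x) ys)" .
    have "PR E i (bM j) ys' \<longleftrightarrow> PR M i (fp (bM j)) (map fo ys')" using perel[OF bYM ys'OE] .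
    moreover have "PR E i (bM j) ys' \<longleftrightarrow> PR M i (bM j) ys" unfolding ys'_def using k5[OF j ys] .
    ultimately show ?thesis using 1 by simp
  qed
  show ?thesis using cM1 cM2 cM3 by blast
qed




lemma nth_image_len: "(\<lambda>l. xs ! l) ` {..<length xs} = set xs"
  by (auto simp: in_set_conv_nth image_iff)

lemma nth_pred_in [simp]: "Suc 0 \<le> l \<Longrightarrow> l \<le> length xs \<Longrightarrow> set xs \<subseteq> A \<Longrightarrow> xs ! (l - Suc 0) \<in> A"
proof -
  assume a: "Suc 0 \<le> l" "l \<le> length xs" "set xs \<subseteq> A"
  have "l - Suc 0 < length xs" using a(1,2) by linarith
  then have "xs ! (l - Suc 0) \<in> set xs" by (rule nth_mem)
  then show ?thesis using a(3) by blast
qed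

lemma nth_pred_in' [simp]: "l \<noteq> 0 \<Longrightarrow> l \<le> length xs \<Longrightarrow> set xs \<subseteq> A \<Longrightarrow> xs ! (l - Suc 0) \<in> A"
  using nth_pred_in[of l xs A] by simp

theorem lemma4p7:
  fixes k :: nat and ar :: "nat \<Rightarrow> nat" and K :: "nat str set"
    and N :: "('o, 'p) pstr" and n :: nat
    and \<phi> :: "nat \<Rightarrow> pfm" and a :: "nat \<Rightarrow> 'o list" and b :: "nat \<Rightarrow> 'p"
  assumes "fraisse_class k ar K"
    and "SAP K"
    and "monster_Tpfc k ar K N"
    and "0 < n"
    and "\<forall>j<n. freeO (\<phi> j) \<subseteq> {0..length (a j)} \<and> freeP (\<phi> j) \<subseteq> {0}"
    and "\<forall>j<n. set (a j) \<subseteq> OS N \<and> b j \<in> PS N"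
    and "inj_on b {..<n}"
    and "\<forall>j<n. infinite (realizations N (\<phi> j) (a j) (b j))"
  shows "infinite (\<Inter>j<n. realizations N (\<phi> j) (a j) (b j))"
proof -
  note FC = assms(1) and SP = assms(2)
  have mt: "model_Tpfc k ar K N" using assms(3) unfolding monster_Tpfc_def by blast
  then have wfN: "wf_pstr k ar N" unfolding model_Tpfc_def by blast
  obtain M where FL: "fraisse_limit_pfc k ar K M" and EEa: "EE M N"
    using mt unfolding model_Tpfc_def EE_def by blast
  have wfM: "wf_pstr k ar M" using FL by (rule wf_of_FL)
  define \<sigma> where "\<sigma> j c = (\<lambda>l. if l = 0 then c else a j ! (l - 1))" for j c
  define vpN where "vpN j = (\<lambda>_::nat. b j)" for j
  have key: "\<exists>c\<in>(\<Inter>j<n. realizations N (\<phi> j) (a j) (b j)). c \<notin> C" if C: "finite C" "C \<subseteq> OS N" for C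
  proof -
    define X where "X = C \<union> (\<Union>j<n. set (a j))"
    have Xfin: "finite X" unfolding X_def using C by auto
    have XN: "X \<subseteq> OS N" unfolding X_def using C assms(6) by auto
    have aX: "set (a j) \<subseteq> X" if "j < n" for j unfolding X_def using that by auto
    obtain xs where xs: "distinct xs" "set xs = X" using finite_distinct_list[OF Xfin] by blast
    define m where "m = length xs"
    define Y where "Y = b ` {..<n}"
    define \<tau> where "\<tau> = (\<lambda>l. xs ! l)"
    have ic0: "incar N \<tau> b {..<m} {..<n}" unfolding incar_def \<tau>_def m_def using xs XN assms(6) by auto
    obtain vo' vp' where r: "incar M vo' vp' {..<m} {..<n}" "sameqf N \<tau> b M vo' vp' {..<m} {..<n}"
      using realize[OF wfN FL EEa ic0] by blast
    obtain fo fp where pis0: "piso N M (\<tau> ` {..<m}) (b ` {..<n}) fo fp" "\<forall>l\<in>{..<m}. fo (\<tau> l) = vo' l"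
      "\<forall>z\<in>{..<n}. fp (b z) = vp' z"
      using sameqf_piso[OF r(2) r(1)] by blast
    have tX: "\<tau> ` {..<m} = X" unfolding \<tau>_def m_def nth_image_len using xs(2) .
    have pis: "piso N M X Y fo fp" using pis0(1) tX unfolding Y_def by simp
    have foX: "fo ` X \<subseteq> OS M" and fpY: "fp ` Y \<subseteq> PS M" and foinj: "inj_on fo X" and fpinj: "inj_on fp Y"
      using pis unfolding piso_def by auto
    define \<sigma>M where "\<sigma>M j c = (\<lambda>l. if l = 0 then c else fo (a j ! (l - 1)))" for j c
    define vpM where "vpM j = (\<lambda>_::nat. fp (b j))" for j
    have "\<forall>j\<in>{..<n}. \<exists>c. c \<in> realizations N (\<phi> j) (a j) (b j) \<and> c \<notin> X"
    proof
      fix j assume "j \<in> {..<n}"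
      then have "infinite (realizations N (\<phi> j) (a j) (b j) - X)" using assms(8) Xfin by (simp add: Diff_infinite_finite)
      then obtain c where "c \<in> realizations N (\<phi> j) (a j) (b j) - X" using infinite_imp_nonempty by blast
      then show "\<exists>c. c \<in> realizations N (\<phi> j) (a j) (b j) \<and> c \<notin> X" by blast
    qed
    then obtain cN where cN: "\<forall>j\<in>{..<n}. cN j \<in> realizations N (\<phi> j) (a j) (b j) \<and> cN j \<notin> X"
      using bchoice by metis
    have "\<forall>j\<in>{..<n}. \<exists>c'. c' \<in> OS M \<and> c' \<notin> fo ` set (a j) \<and>
        sameqf N (\<sigma> j (cN j)) (vpN j) M (\<sigma>M j c') (vpM j) {0..length (a j)} {0}"
    proof
      fix j assume "j \<in> {..<n}"
      then have j: "j < n" by simp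
      define L where "L = length (a j)"
      have cNj: "cN j \<in> OS N" "psat N (\<sigma> j (cN j)) (vpN j) (\<phi> j)" "cN j \<notin> X"
        using cN j unfolding realizations_def \<sigma>_def vpN_def by auto
      have sq1: "sameqf N (\<sigma> j (cN j)) (vpN j) M (\<sigma>M j 0) (vpM j) {1..L} {0}"
      proof (rule piso_sameqf[OF pis])
        show "\<forall>l\<in>{1..L}. \<sigma> j (cN j) l \<in> X \<and> \<sigma>M j 0 l = fo (\<sigma> j (cN j) l)"
        proof
          fix l assume "l \<in> {1..L}"
          then have "a j ! (l - 1) \<in> set (a j)" unfolding L_def by auto
          then show "\<sigma> j (cN j) l \<in> X \<and> \<sigma>M j 0 l = fo (\<sigma> j (cN j) l)"
            using aX[OF j] \<open>l \<in> {1..L}\<close> unfolding \<sigma>_def \<sigma>M_def by auto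
        qed
        show "\<forall>z\<in>{0}. vpN j z \<in> Y \<and> vpM j z = fp (vpN j z)" unfolding vpN_def vpM_def Y_def using j by auto
      qed
      define \<psi> where "\<psi> = ExO 0 (Diag k ar N (\<sigma> j (cN j)) (vpN j) [0..<Suc L] [0])"
      have fr: "freeO \<psi> \<subseteq> {1..L}" "freeP \<psi> \<subseteq> {0}"
        using freeO_Diag[of k ar N "\<sigma> j (cN j)" "vpN j" "[0..<Suc L]" "[0]"]
          freeP_Diag[of k ar N "\<sigma> j (cN j)" "vpN j" "[0..<Suc L]" "[0]"]
        unfolding \<psi>_def by auto
      have "(\<sigma> j (cN j))(0 := cN j) = \<sigma> j (cN j)" unfolding \<sigma>_def by auto
      moreover have "psat N (\<sigma> j (cN j)) (vpN j) (Diag k ar N (\<sigma> j (cN j)) (vpN j) [0..<Suc L] [0])"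
        using psat_Diag[OF wfN wfN] sameqf_refl by simp
      ultimately have th: "psat N ((\<sigma> j (cN j))(0 := cN j)) (vpN j) (Diag k ar N (\<sigma> j (cN j)) (vpN j) [0..<Suc L] [0])"
        by simp
      have "psat N (\<sigma> j (cN j)) (vpN j) \<psi>" unfolding \<psi>_def psat.simps by (rule bexI[of _ "cN j"], rule th, rule cNj(1))
      moreover have "incar N (\<sigma> j (cN j)) (vpN j) {1..L} {0}"
        unfolding incar_def
      proof (intro conjI ballI)
        fix l assume l: "l \<in> {1..L}"
        then have "a j ! (l - 1) \<in> set (a j)" unfolding L_def by auto
        then show "\<sigma> j (cN j) l \<in> OS N" using l assms(6) j unfolding \<sigma>_def by auto
      next
        fix z assume "z \<in> {0::nat}"
        then show "vpN j z \<in> PS N" unfolding vpN_def using assms(6) j by auto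
      qed
      moreover have "incar M (\<sigma>M j 0) (vpM j) {1..L} {0}"
        unfolding incar_def \<sigma>M_def vpM_def L_def using foX fpY aX[OF j] j unfolding Y_def by auto
      ultimately have "psat M (\<sigma>M j 0) (vpM j) \<psi>"
        using cross_qe[OF wfN FL EEa sq1 _ _ _ _ fr] by auto
      then obtain c' where c': "c' \<in> OS M" "psat M ((\<sigma>M j 0)(0 := c')) (vpM j) (Diag k ar N (\<sigma> j (cN j)) (vpN j) [0..<Suc L] [0])"
        unfolding \<psi>_def by auto
      have "(\<sigma>M j 0)(0 := c') = \<sigma>M j c'" unfolding \<sigma>M_def by auto
      then have s0: "sameqf N (\<sigma> j (cN j)) (vpN j) M (\<sigma>M j c') (vpM j) (set [0..<Suc L]) (set [0])"
        using psat_Diag[OF wfN wfM, THEN iffD1, OF c'(2)] by simp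
      have e1: "set [0..<Suc L] = {0..L}" "set [0::nat] = {0}" by auto
      have sq: "sameqf N (\<sigma> j (cN j)) (vpN j) M (\<sigma>M j c') (vpM j) {0..L} {0}"
        using s0 unfolding e1 .
      have "c' \<notin> fo ` set (a j)"
      proof
        assume "c' \<in> fo ` set (a j)"
        then obtain q where q: "q < L" "c' = fo (a j ! q)" unfolding L_def by (auto simp: in_set_conv_nth)
        have "(\<sigma> j (cN j) 0 = \<sigma> j (cN j) (Suc q)) = (\<sigma>M j c' 0 = \<sigma>M j c' (Suc q))"
          using sq q(1) unfolding sameqf_def by auto
        then have "cN j = a j ! q" using q(2) unfolding \<sigma>_def \<sigma>M_def by simp
        moreover have "a j ! q \<in> X" using aX[OF j] nth_mem[of q "a j"] q(1) unfolding L_def by blast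
        ultimately show False using cNj(3) by simp
      qed
      then show "\<exists>c'. c' \<in> OS M \<and> c' \<notin> fo ` set (a j) \<and>
        sameqf N (\<sigma> j (cN j)) (vpN j) M (\<sigma>M j c') (vpM j) {0..length (a j)} {0}"
        using c'(1) sq unfolding L_def by blast
    qed
    then obtain cM' where cM': "\<forall>j\<in>{..<n}. cM' j \<in> OS M \<and> cM' j \<notin> fo ` set (a j) \<and>
        sameqf N (\<sigma> j (cN j)) (vpN j) M (\<sigma>M j (cM' j)) (vpM j) {0..length (a j)} {0}"
      using bchoice by metis
    have bMinj: "inj_on (\<lambda>j. fp (b j)) {..<n}"
      using comp_inj_on[OF assms(7), of fp] fpinj unfolding Y_def by (simp add: o_def)
    obtain cMM where cMM: "cMM \<in> OS M" "cMM \<notin> fo ` X"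
      "\<forall>j<n. \<forall>i ys. set ys \<subseteq> insert (cM' j) (fo ` set (a j)) \<longrightarrow>
            (PR M i (fp (b j)) ys \<longleftrightarrow> PR M i (fp (b j)) (map (\<lambda>x. if x = cM' j then cMM else x) ys))"
    proof -
      have p1: "\<forall>j<n. fp (b j) \<in> PS M" using fpY unfolding Y_def by auto
      have p2: "\<forall>j<n. fo ` set (a j) \<subseteq> fo ` X" using aX by (simp add: image_mono)
      have p3: "\<forall>j<n. cM' j \<in> OS M \<and> cM' j \<notin> fo ` set (a j)" using cM' by auto
      show ?thesis using amalg_ext[OF FC SP FL finite_imageI[OF Xfin] foX p1 bMinj p2 p3] that by blast
    qed
    define \<tau>' where "\<tau>' = (\<lambda>l. if l < m then fo (xs ! l) else cMM)"
    define fpb where "fpb = (\<lambda>z. fp (b z))"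
    have sqb: "sameqf N \<tau> b M \<tau>' fpb {..<m} {..<n}"
    proof (rule piso_sameqf[OF pis])
      show "\<forall>l\<in>{..<m}. \<tau> l \<in> X \<and> \<tau>' l = fo (\<tau> l)" unfolding \<tau>_def \<tau>'_def m_def using xs(2) by auto
      show "\<forall>z\<in>{..<n}. b z \<in> Y \<and> fpb z = fp (b z)" unfolding Y_def fpb_def by auto
    qed
    define \<psi>2 where "\<psi>2 = ExO m (Diag k ar M \<tau>' fpb [0..<Suc m] [0..<n])"
    have fr2: "freeO \<psi>2 \<subseteq> {..<m}" "freeP \<psi>2 \<subseteq> {..<n}"
      using freeO_Diag[of k ar M \<tau>' fpb "[0..<Suc m]" "[0..<n]"] freeP_Diag[of k ar M \<tau>' fpb "[0..<Suc m]" "[0..<n]"]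
      unfolding \<psi>2_def by auto
    have "\<tau>'(m := cMM) = \<tau>'" unfolding \<tau>'_def by auto
    moreover have "psat M \<tau>' fpb (Diag k ar M \<tau>' fpb [0..<Suc m] [0..<n])"
      using psat_Diag[OF wfM wfM] sameqf_refl by simp
    ultimately have th2: "psat M (\<tau>'(m := cMM)) fpb (Diag k ar M \<tau>' fpb [0..<Suc m] [0..<n])" by simp
    have "psat M \<tau>' fpb \<psi>2" unfolding \<psi>2_def psat.simps by (rule bexI[of _ cMM], rule th2, rule cMM(1))
    moreover have "incar M \<tau>' fpb {..<m} {..<n}"
      unfolding incar_def \<tau>'_def fpb_def m_def using foX fpY xs(2) unfolding Y_def by auto
    ultimately have "psat N \<tau> b \<psi>2"
      using cross_qe[OF wfN FL EEa sqb ic0 _ _ _ fr2] by auto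
    then obtain c where c: "c \<in> OS N" "psat N (\<tau>(m := c)) b (Diag k ar M \<tau>' fpb [0..<Suc m] [0..<n])"
      unfolding \<psi>2_def by auto
    have sqc: "sameqf N (\<tau>(m := c)) b M \<tau>' fpb {..<Suc m} {..<n}"
    proof -
      have s0: "sameqf M \<tau>' fpb N (\<tau>(m := c)) b (set [0..<Suc m]) (set [0..<n])"
        using psat_Diag[OF wfM wfN, THEN iffD1, OF c(2)] .
      have e1: "set [0..<Suc m] = {..<Suc m}" "set [0..<n] = {..<n}" by auto
      show ?thesis using sameqf_sym[OF s0] unfolding e1 .
    qed
    have icM: "incar M \<tau>' fpb {..<Suc m} {..<n}"
      unfolding incar_def \<tau>'_def fpb_def m_def using foX fpY xs(2) cMM(1) unfolding Y_def by auto
    obtain fo2 fp2 where p2: "piso N M ((\<tau>(m := c)) ` {..<Suc m}) (b ` {..<n}) fo2 fp2"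
       "\<forall>l\<in>{..<Suc m}. fo2 ((\<tau>(m := c)) l) = \<tau>' l" "\<forall>z\<in>{..<n}. fp2 (b z) = fpb z"
      using sameqf_piso[OF sqc icM] by blast
    have cX: "c \<notin> X"
    proof
      assume "c \<in> X"
      then obtain q where q: "q < m" "c = xs ! q" using xs(2) unfolding m_def by (auto simp: in_set_conv_nth)
      have h: "\<forall>l\<in>{..<Suc m}. \<forall>l'\<in>{..<Suc m}. ((\<tau>(m := c)) l = (\<tau>(m := c)) l') = (\<tau>' l = \<tau>' l')"
        using sqc unfolding sameqf_def by blast
      have qin: "q \<in> {..<Suc m}" "m \<in> {..<Suc m}" using q(1) by auto
      have hh: "((\<tau>(m := c)) q = (\<tau>(m := c)) m) = (\<tau>' q = \<tau>' m)" by (rule h[rule_format, OF qin])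
      moreover have "(\<tau>(m := c)) q = (\<tau>(m := c)) m" using q unfolding \<tau>_def by simp
      ultimately have "\<tau>' q = \<tau>' m" by simp
      then have "fo (xs ! q) = cMM" using q(1) unfolding \<tau>'_def by simp
      then show False using cMM(2) q xs(2) unfolding m_def by auto
    qed
    have U2: "insert c X \<subseteq> (\<tau>(m := c)) ` {..<Suc m}"
    proof
      fix x assume "x \<in> insert c X"
      then show "x \<in> (\<tau>(m := c)) ` {..<Suc m}"
      proof
        assume "x = c" then show ?thesis by (intro image_eqI[of _ _ m]) auto
      next
        assume "x \<in> X"
        then obtain q where q: "q < m" "x = xs ! q" using xs(2) unfolding m_def by (auto simp: in_set_conv_nth)
        then show ?thesis unfolding \<tau>_def by (intro image_eqI[of _ _ q]) auto
      qed
    qed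
    have fo2X: "fo2 x = fo x" if xX: "x \<in> X" for x
    proof -
      obtain q where q: "q < m" "x = xs ! q" using xX xs(2) unfolding m_def by (auto simp: in_set_conv_nth)
      have "q \<in> {..<Suc m}" using q(1) by simp
      then have "fo2 ((\<tau>(m := c)) q) = \<tau>' q" using p2(2) by blast
      then show ?thesis using q unfolding \<tau>_def \<tau>'_def by simp
    qed
    have fo2c: "fo2 c = cMM"
    proof -
      have "m \<in> {..<Suc m}" by simp
      then have "fo2 ((\<tau>(m := c)) m) = \<tau>' m" using p2(2) by blast
      then show ?thesis unfolding \<tau>'_def by simp
    qed
    have "c \<in> realizations N (\<phi> j) (a j) (b j)" if j: "j < n" for j
    proof -
      define L where "L = length (a j)"
      have sqA: "sameqf N (\<sigma> j c) (vpN j) M (\<sigma>M j cMM) (vpM j) {0..L} {0}"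
      proof (rule piso_sameqf[OF p2(1)])
        show "\<forall>l\<in>{0..L}. \<sigma> j c l \<in> (\<tau>(m := c)) ` {..<Suc m} \<and> \<sigma>M j cMM l = fo2 (\<sigma> j c l)"
        proof
          fix l assume l: "l \<in> {0..L}"
          show "\<sigma> j c l \<in> (\<tau>(m := c)) ` {..<Suc m} \<and> \<sigma>M j cMM l = fo2 (\<sigma> j c l)"
          proof (cases "l = 0")
            case True then show ?thesis using U2 fo2c unfolding \<sigma>_def \<sigma>M_def by auto
          next
            case False
            then have "a j ! (l - 1) \<in> X" using l aX[OF j] unfolding L_def by auto
            then show ?thesis using False U2 fo2X unfolding \<sigma>_def \<sigma>M_def by auto
          qed
        qed
        show "\<forall>z\<in>{0}. vpN j z \<in> b ` {..<n} \<and> vpM j z = fp2 (vpN j z)"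
          using p2(3) j unfolding vpN_def vpM_def fpb_def by auto
      qed
      have cj: "cM' j \<in> OS M" "cM' j \<notin> fo ` set (a j)"
        "sameqf N (\<sigma> j (cN j)) (vpN j) M (\<sigma>M j (cM' j)) (vpM j) {0..L} {0}"
        using cM' j unfolding L_def by auto
      have sqB: "sameqf M (\<sigma>M j cMM) (vpM j) M (\<sigma>M j (cM' j)) (vpM j) {0..L} {0}"
        unfolding sameqf_def
      proof (intro conjI ballI allI impI)
        fix l l' assume l: "l \<in> {0..L}" "l' \<in> {0..L}"
        have n1: "cMM \<noteq> fo (a j ! q)" if qL: "q < L" for q
        proof -
          have "a j ! q \<in> X" using aX[OF j] nth_mem[of q "a j"] qL unfolding L_def by blast
          then show ?thesis using cMM(2) by blast
        qed
        have n2: "cM' j \<noteq> fo (a j ! q)" if "q < L" for q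
          using cj(2) that unfolding L_def by auto
        show "(\<sigma>M j cMM l = \<sigma>M j cMM l') = (\<sigma>M j (cM' j) l = \<sigma>M j (cM' j) l')"
        proof -
          have c1: "cMM \<noteq> fo (a j ! (l - 1)) \<and> cM' j \<noteq> fo (a j ! (l - 1))" if "l \<noteq> 0"
          proof -
            have "l - 1 < L" using l that by auto
            then show ?thesis using n1 n2 by blast
          qed
          have c2: "cMM \<noteq> fo (a j ! (l' - 1)) \<and> cM' j \<noteq> fo (a j ! (l' - 1))" if "l' \<noteq> 0"
          proof -
            have "l' - 1 < L" using l that by auto
            then show ?thesis using n1 n2 by blast
          qed
          show ?thesis unfolding \<sigma>M_def using c1 c2
            by (cases "l = 0"; cases "l' = 0") auto
        qed
      next
        fix z z' assume "z \<in> {0::nat}" "z' \<in> {0::nat}"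
        then show "(vpM j z = vpM j z') = (vpM j z = vpM j z')" by simp
      next
        fix i z ys assume z: "z \<in> {0::nat}" and ys: "set ys \<subseteq> {0..L}"
        define ys0 where "ys0 = map (\<sigma>M j (cM' j)) ys"
        have s0: "set ys0 \<subseteq> insert (cM' j) (fo ` set (a j))"
          unfolding ys0_def \<sigma>M_def using ys unfolding L_def by auto
        have mm: "map (\<lambda>x. if x = cM' j then cMM else x) ys0 = map (\<sigma>M j cMM) ys"
        proof -
          have "(if \<sigma>M j (cM' j) l = cM' j then cMM else \<sigma>M j (cM' j) l) = \<sigma>M j cMM l" if "l \<in> set ys" for l
          proof (cases "l = 0")
            case True then show ?thesis unfolding \<sigma>M_def by simp
          next
            case False
            then have "l - 1 < L" using that ys by auto
            then have "cM' j \<noteq> fo (a j ! (l - 1))" using cj(2) unfolding L_def by auto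
            then show ?thesis using False unfolding \<sigma>M_def by auto
          qed
          then show ?thesis unfolding ys0_def by simp
        qed
        have "PR M i (fp (b j)) ys0 \<longleftrightarrow> PR M i (fp (b j)) (map (\<lambda>x. if x = cM' j then cMM else x) ys0)"
          using cMM(3) j s0 by blast
        then show "PR M i (vpM j z) (map (\<sigma>M j cMM) ys) = PR M i (vpM j z) (map (\<sigma>M j (cM' j)) ys)"
          unfolding vpM_def mm[symmetric] ys0_def by simp
      qed
      have sqAB: "sameqf N (\<sigma> j c) (vpN j) M (\<sigma>M j (cM' j)) (vpM j) {0..L} {0}"
        using sameqf_trans[OF sqA sqB] .
      have frj: "freeO (\<phi> j) \<subseteq> {0..L}" "freeP (\<phi> j) \<subseteq> {0}" using assms(5) j unfolding L_def by auto
      have icN1: "incar N (\<sigma> j c) (vpN j) {0..L} {0}"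
        unfolding incar_def \<sigma>_def vpN_def L_def using c(1) assms(6) j by auto
      have icN2: "incar N (\<sigma> j (cN j)) (vpN j) {0..L} {0}"
        using cN j unfolding incar_def \<sigma>_def vpN_def L_def realizations_def using assms(6) by auto
      have icM: "incar M (\<sigma>M j (cM' j)) (vpM j) {0..L} {0}"
        unfolding incar_def \<sigma>M_def vpM_def L_def using cj(1) foX fpY aX[OF j] j unfolding Y_def by auto
      have "psat N (\<sigma> j (cN j)) (vpN j) (\<phi> j)"
        using cN j unfolding realizations_def \<sigma>_def vpN_def by auto
      then have "psat M (\<sigma>M j (cM' j)) (vpM j) (\<phi> j)"
        using cross_qe[OF wfN FL EEa cj(3) icN2 icM _ _ frj] by auto
      then have "psat N (\<sigma> j c) (vpN j) (\<phi> j)"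
        using cross_qe[OF wfN FL EEa sqAB icN1 icM _ _ frj] by auto
      then show ?thesis unfolding realizations_def \<sigma>_def vpN_def using c(1) by auto
    qed
    then show ?thesis using cX C unfolding X_def by auto
  qed
  show ?thesis
  proof
    assume fin: "finite (\<Inter>j<n. realizations N (\<phi> j) (a j) (b j))"
    have "(\<Inter>j<n. realizations N (\<phi> j) (a j) (b j)) \<subseteq> OS N"
      using assms(4) unfolding realizations_def by auto
    then show False using key[OF fin] by blast
  qed
qed


end
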